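(* Let $\rho\colon[0,1]^2\times\mathbb{R}^n\to\mathbb{R}$ be a continuously differentiable two-parameter family of probability densities with $\rho(s,t,\cdot)\in\mathcal P_2(\mathbb{R}^n)$, let $v_s,v_t\colon[0,1]^2\times\mathbb{R}^n\to\mathbb{R}^n$ be continuously differentiable vector fields, and write $$A(s,t)=\sqrt{\int \|v_s\|^2\rho\, dx\cdot \int\|v_t\|^2\rho\, dx-\Big(\int v_s\cdot v_t\,\rho\, dx\Big)^2 }.$$ Suppose there exist functions $\Phi_s,\Phi_t\colon[0,1]^2\times\mathbb{R}^n\to\mathbb{R}$ such that $$A^{-1}\Big[v_s\int \|v_t\|^2\rho\,dx-v_t\int v_s\cdot v_t\,\rho\,dx\Big]=\nabla\Phi_s,\qquad A^{-1}\Big[v_t\int \|v_s\|^2\rho\,dx-v_s\int v_s\cdot v_t\,\rho\,dx\Big]=\nabla\Phi_t,$$ $$\partial_s\Phi_s+\partial_t\Phi_t+A^{-1}\Big[\tfrac{1}{2}\|v_s\|^2\int \|v_t\|^2\rho\,dx +\tfrac{1}{2}\|v_t\|^2\int\|v_s\|^2\rho\,dx - (v_t\cdot v_s)\int v_t\cdot v_s\,\rho\, dx\Big]=0,$$ $$\partial_s\rho+\nabla\cdot (\rho v_s)=0,\qquad \partial_t\rho+\nabla\cdot (\rho v_t)=0.$$ Then $\rho$ is a critical point of the variational problem $$\inf_{v_s,v_t,\rho}\int_0^1\int_0^1 A(s,t)\,ds\,dt$$ subject to the continuity equations $\partial_s\rho+\nabla\cdot(\rho v_s)=0$, $\partial_t\rho+\nabla\cdot(\rho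 v_t)=0$, with the four boundary curves $\rho(0,t,\cdot)$, $\rho(1,t,\cdot)$, $\rho(s,0,\cdot)$, $\rho(s,1,\cdot)$, $s,t\in[0,1]$, held fixed.
   Context: All integrals $\int$ without limits are over $\mathbb{R}^n$. $\mathcal P_2(\mathbb{R}^n)$ denotes probability densities on $\mathbb{R}^n$ with finite second moments. The boundary data consist of four densities $\rho(0,0,\cdot),\rho(0,1,\cdot),\rho(1,0,\cdot),\rho(1,1,\cdot)$ in $\mathcal P_2$ and the four Wasserstein-2 geodesics $\rho(0,t,\cdot)$, $\rho(1,t,\cdot)$, $\rho(s,0,\cdot)$, $\rho(s,1,\cdot)$ ($s,t\in[0,1]$) connecting them, forming a "rectangle" in density space. The minimization is over two-parameter density surfaces $\rho$ and vector fields $v_s,v_t$ with these boundary values. "Critical point" refers to vanishing of the $L^2$ first variation of the associated Lagrangian (with multipliers $\Phi_s,\Phi_t$ for the two continuity constraints) in all variables. *)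

theory Defs
  imports "HOL-Analysis.Analysis"
begin

definition C1_on :: "'a::real_normed_vector set \<Rightarrow> ('a \<Rightarrow> 'b::real_normed_vector) \<Rightarrow> bool" where
  "C1_on S f \<longleftrightarrow> (\<exists>f'. (\<forall>p\<in>S. (f has_derivative blinfun_apply (f' p)) (at p within S))
                        \<and> continuous_on S f')"

definition unc :: "(real \<Rightarrow> real \<Rightarrow> 'x \<Rightarrow> 'b) \<Rightarrow> real \<times> real \<times> 'x \<Rightarrow> 'b" where
  "unc f = (\<lambda>(s,t,x). f s t x)"

definition Dom :: "(real \<times> real \<times> (real^'n)) set" where
  "Dom = {0..1} \<times> {0..1} \<times> UNIV"
definition IntDom :: "(real \<times> real \<times> (real^'n)) set" where
  "IntDom = {0<..<1} \<times> {0<..<1} \<times> UNIV"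

definition ds :: "(real \<Rightarrow> real \<Rightarrow> real^'n \<Rightarrow> real) \<Rightarrow> real \<Rightarrow> real \<Rightarrow> real^'n \<Rightarrow> real" where
  "ds f s t x = deriv (\<lambda>\<sigma>. f \<sigma> t x) s"
definition dt :: "(real \<Rightarrow> real \<Rightarrow> real^'n \<Rightarrow> real) \<Rightarrow> real \<Rightarrow> real \<Rightarrow> real^'n \<Rightarrow> real" where
  "dt f s t x = deriv (\<lambda>\<tau>. f s \<tau> x) t"
definition grad :: "(real \<Rightarrow> real \<Rightarrow> real^'n \<Rightarrow> real) \<Rightarrow> real \<Rightarrow> real \<Rightarrow> real^'n \<Rightarrow> real^'n" where
  "grad f s t x = (\<chi> i. deriv (\<lambda>h. f s t (x + h *\<^sub>R axis i 1)) 0)"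
definition divg :: "(real \<Rightarrow> real \<Rightarrow> real^'n \<Rightarrow> real^'n) \<Rightarrow> real \<Rightarrow> real \<Rightarrow> real^'n \<Rightarrow> real" where
  "divg w s t x = (\<Sum>i\<in>UNIV. deriv (\<lambda>h. w s t (x + h *\<^sub>R axis i 1) $ i) 0)"

definition Gss :: "(real \<Rightarrow> real \<Rightarrow> real^'n \<Rightarrow> real) \<Rightarrow> (real \<Rightarrow> real \<Rightarrow> real^'n \<Rightarrow> real^'n) \<Rightarrow> real \<Rightarrow> real \<Rightarrow> real" where
  "Gss \<rho> v s t = (LINT x|lborel. (norm (v s t x))\<^sup>2 * \<rho> s t x)"
definition Gst :: "(real \<Rightarrow> real \<Rightarrow> real^'n \<Rightarrow> real) \<Rightarrow> (real \<Rightarrow> real \<Rightarrow> real^'n \<Rightarrow> real^'n) \<Rightarrow> (real \<Rightarrow> real \<Rightarrow> real^'n \<Rightarrow> real^'n) \<Rightarrow> real \<Rightarrow> real \<Rightarrow> real" where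
  "Gst \<rho> v w s t = (LINT x|lborel. (v s t x \<bullet> w s t x) * \<rho> s t x)"
definition Aarea :: "(real \<Rightarrow> real \<Rightarrow> real^'n \<Rightarrow> real) \<Rightarrow> (real \<Rightarrow> real \<Rightarrow> real^'n \<Rightarrow> real^'n) \<Rightarrow> (real \<Rightarrow> real \<Rightarrow> real^'n \<Rightarrow> real^'n) \<Rightarrow> real \<Rightarrow> real \<Rightarrow> real" where
  "Aarea \<rho> vs vt s t = sqrt (Gss \<rho> vs s t * Gss \<rho> vt s t - (Gst \<rho> vs vt s t)\<^sup>2)"

text \<open>Density (in s,t,x) of the multiplier part of the Lagrangian
  L = int int A ds dt + int int int [Phi_s (d_s rho + div(rho v_s)) + Phi_t (d_t rho + div(rho v_t))] dx ds dt.\<close>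
definition lag_density ::
  "(real \<Rightarrow> real \<Rightarrow> real^'n \<Rightarrow> real) \<Rightarrow> (real \<Rightarrow> real \<Rightarrow> real^'n \<Rightarrow> real^'n) \<Rightarrow> (real \<Rightarrow> real \<Rightarrow> real^'n \<Rightarrow> real^'n)
   \<Rightarrow> (real \<Rightarrow> real \<Rightarrow> real^'n \<Rightarrow> real) \<Rightarrow> (real \<Rightarrow> real \<Rightarrow> real^'n \<Rightarrow> real) \<Rightarrow> real \<Rightarrow> real \<Rightarrow> real^'n \<Rightarrow> real" where
  "lag_density \<rho> vs vt \<Phi>s \<Phi>t s t x =
     \<Phi>s s t x * (ds \<rho> s t x + divg (\<lambda>s t x. \<rho> s t x *\<^sub>R vs s t x) s t x)
   + \<Phi>t s t x * (dt \<rho> s t x + divg (\<lambda>s t x. \<rho> s t x *\<^sub>R vt s t x) s t x)"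

text \<open>Test perturbations: C^1 with compact support inside (0,1)^2 x R^n
  (so they vanish near the four boundary curves, which are held fixed).\<close>
definition test_fun :: "(real \<Rightarrow> real \<Rightarrow> real^'n \<Rightarrow> 'b::real_normed_vector) \<Rightarrow> bool" where
  "test_fun \<phi> \<longleftrightarrow> C1_on UNIV (unc \<phi>) \<and>
     (\<exists>K. compact K \<and> K \<subseteq> IntDom \<and> (\<forall>p. p \<notin> K \<longrightarrow> unc \<phi> p = 0))"

definition pert :: "(real \<Rightarrow> real \<Rightarrow> real^'n \<Rightarrow> 'b::real_vector) \<Rightarrow> real \<Rightarrow> (real \<Rightarrow> real \<Rightarrow> real^'n \<Rightarrow> 'b) \<Rightarrow> real \<Rightarrow> real \<Rightarrow> real^'n \<Rightarrow> 'b" where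
  "pert f \<epsilon> g = (\<lambda>s t x. f s t x + \<epsilon> *\<^sub>R g s t x)"

definition first_var_integrand where
  "first_var_integrand \<rho> vs vt \<Phi>s \<Phi>t d\<rho> dvs dvt d\<Phi>s d\<Phi>t s t =
     deriv (\<lambda>\<epsilon>. Aarea (pert \<rho> \<epsilon> d\<rho>) (pert vs \<epsilon> dvs) (pert vt \<epsilon> dvt) s t) 0
   + (LINT x|lborel. deriv (\<lambda>\<epsilon>. lag_density (pert \<rho> \<epsilon> d\<rho>) (pert vs \<epsilon> dvs) (pert vt \<epsilon> dvt)
                                   (pert \<Phi>s \<epsilon> d\<Phi>s) (pert \<Phi>t \<epsilon> d\<Phi>t) s t x) 0)"

definition critical_point where
  "critical_point \<rho> vs vt \<Phi>s \<Phi>t \<longleftrightarrow>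
    (\<forall>d\<rho> dvs dvt d\<Phi>s d\<Phi>t.
      test_fun d\<rho> \<and> test_fun dvs \<and> test_fun dvt \<and> test_fun d\<Phi>s \<and> test_fun d\<Phi>t \<longrightarrow>
      (\<forall>s\<in>{0<..<1}. \<forall>t\<in>{0<..<1}.
         (\<lambda>\<epsilon>. Aarea (pert \<rho> \<epsilon> d\<rho>) (pert vs \<epsilon> dvs) (pert vt \<epsilon> dvt) s t) differentiable (at 0)
       \<and> (\<forall>x. (\<lambda>\<epsilon>. lag_density (pert \<rho> \<epsilon> d\<rho>) (pert vs \<epsilon> dvs) (pert vt \<epsilon> dvt)
                                (pert \<Phi>s \<epsilon> d\<Phi>s) (pert \<Phi>t \<epsilon> d\<Phi>t) s t x) differentiable (at 0))
       \<and> integrable lborel (\<lambda>x. deriv (\<lambda>\<epsilon>. lag_density (pert \<rho> \<epsilon> d\<rho>) (pert vs \<epsilon> dvs) (pert vt \<epsilon> dvt)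
                                (pert \<Phi>s \<epsilon> d\<Phi>s) (pert \<Phi>t \<epsilon> d\<Phi>t) s t x) 0))
      \<and> set_integrable lborel ({0<..<1} \<times> {0<..<1})
           (\<lambda>(s,t). first_var_integrand \<rho> vs vt \<Phi>s \<Phi>t d\<rho> dvs dvt d\<Phi>s d\<Phi>t s t)
      \<and> (LINT p:{0<..<1} \<times> {0<..<1}|lborel.
           (\<lambda>(s,t). first_var_integrand \<rho> vs vt \<Phi>s \<Phi>t d\<rho> dvs dvt d\<Phi>s d\<Phi>t s t) p) = 0)"

end

theory Submission
  imports Defs
begin


lemma deriv_zero_outside:
  fixes g :: "'a::real_normed_vector \<Rightarrow> real"
  assumes D: "((\<lambda>h. g (x + h *\<^sub>R e)) has_real_derivative d) (at 0)"
    and S: "closed S" "\<And>y. y \<notin> S \<Longrightarrow> g y = 0" and x: "x \<notin> S"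
  shows "d = 0"
proof -
  have "open (-S)" using S by auto
  then obtain r where r: "r > 0" "ball x r \<subseteq> -S" using x
    by (metis ComplI open_contains_ball)
  have ev: "eventually (\<lambda>h. g (x + h *\<^sub>R e) = 0) (nhds 0)"
    unfolding eventually_nhds_metric
  proof (intro exI[of _ "r / (norm e + 1)"] conjI allI impI)
    show "0 < r / (norm e + 1)" using r by (simp add: add_nonneg_pos)
    fix h :: real assume h: "dist h 0 < r / (norm e + 1)"
    have "norm (h *\<^sub>R e) = \<bar>h\<bar> * norm e" by simp
    also have "\<dots> \<le> \<bar>h\<bar> * (norm e + 1)" by (simp add: mult_left_mono)
    also have "\<dots> < r" using h by (simp add: pos_less_divide_eq add_nonneg_pos)
    finally have "x + h *\<^sub>R e \<in> ball x r" by (simp add: dist_norm)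
    then show "g (x + h *\<^sub>R e) = 0" using r S by auto
  qed
  have "((\<lambda>_. 0::real) has_real_derivative d) (at 0)"
    using D DERIV_cong_ev[OF refl ev refl] by simp
  then show ?thesis using DERIV_unique DERIV_const by blast
qed

lemma integral_partial_zero:
  fixes g ge :: "'a::euclidean_space \<Rightarrow> real"
  assumes D: "\<And>x. ((\<lambda>h. g (x + h *\<^sub>R e)) has_real_derivative ge x) (at 0)"
    and cge: "continuous_on UNIV ge" and cg: "continuous_on UNIV g"
    and S: "compact S" "\<And>x. x \<notin> S \<Longrightarrow> g x = 0"
  shows "integrable lborel ge \<and> integral\<^sup>L lborel ge = 0"
proof -
  have clS: "closed S" using S compact_imp_closed by auto
  have ge0: "ge x = 0" if "x \<notin> S" for x
    using deriv_zero_outside[OF D clS S(2) that] .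
  obtain B where B: "\<And>x. \<bar>ge x\<bar> \<le> B"
  proof -
    have "bounded (ge ` S)" using S(1) cge
      by (meson compact_continuous_image compact_imp_bounded continuous_on_subset subset_UNIV)
    then obtain B0 where "\<And>x. x \<in> S \<Longrightarrow> \<bar>ge x\<bar> \<le> B0"
      unfolding bounded_iff by auto
    then show ?thesis using that[of "max B0 0"] ge0
      by (metis abs_zero max.cobounded2 max.coboundedI1)
  qed
  have Dh: "((\<lambda>u. g (x + u *\<^sub>R e)) has_real_derivative ge (x + u *\<^sub>R e)) (at u)" for x u
  proof -
    have "((\<lambda>h. g (x + (h + u) *\<^sub>R e)) has_real_derivative ge (x + u *\<^sub>R e)) (at 0)"
      using D[of "x + u *\<^sub>R e"] by (simp add: algebra_simps scaleR_add_left)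
    then show ?thesis using DERIV_shift[of "\<lambda>v. g (x + v *\<^sub>R e)" _ 0 u] by simp
  qed
  have mvt: "\<bar>g (x + h *\<^sub>R e) - g x\<bar> \<le> B * h" if hp: "h > 0" for x h
  proof -
    obtain z where "0 < z" "z < h" "g (x + h *\<^sub>R e) - g (x + 0 *\<^sub>R e) = (h - 0) * ge (x + z *\<^sub>R e)"
      using MVT2[OF hp, of "\<lambda>u. g (x + u *\<^sub>R e)" "\<lambda>u. ge (x + u *\<^sub>R e)"] Dh by blast
    then show ?thesis using B[of "x + z *\<^sub>R e"] hp
      by (simp add: abs_mult mult.commute mult_left_mono)
  qed
  define S2 where "S2 = {x + y | x y. x \<in> S \<and> y \<in> cball 0 (norm e)}"
  have S2c: "compact S2" unfolding S2_def by (intro compact_sums S(1) compact_cball)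
  have SS2: "S \<subseteq> S2" unfolding S2_def by force
  define hn where "hn n = 1 / real (Suc n)" for n
  have hn_pos: "hn n > 0" "hn n \<le> 1" for n unfolding hn_def by (auto simp: field_simps)
  define Q where "Q n x = (g (x + hn n *\<^sub>R e) - g x) / hn n" for n x
  have Qsupp: "Q n x = 0" if "x \<notin> S2" for n x
  proof -
    have "x \<notin> S" using that SS2 by auto
    moreover have "x + hn n *\<^sub>R e \<notin> S"
    proof
      assume "x + hn n *\<^sub>R e \<in> S"
      moreover have "- (hn n *\<^sub>R e) \<in> cball 0 (norm e)"
        using hn_pos[of n] by (simp add: mult_left_le_one_le)
      ultimately have "(x + hn n *\<^sub>R e) + (- (hn n *\<^sub>R e)) \<in> S2"
        unfolding S2_def by blast
      then show False using that by simp
    qed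
    ultimately show ?thesis unfolding Q_def using S(2) by simp
  qed
  have Qb: "\<bar>Q n x\<bar> \<le> B * indicator S2 x" for n x
  proof (cases "x \<in> S2")
    case True
    have "\<bar>Q n x\<bar> = \<bar>g (x + hn n *\<^sub>R e) - g x\<bar> / hn n" unfolding Q_def using hn_pos[of n] by simp
    also have "\<dots> \<le> B" using mvt[of "hn n" x] hn_pos[of n] by (simp add: divide_le_eq)
    finally show ?thesis using True by simp
  next
    case False then show ?thesis using Qsupp by simp
  qed
  have gint: "integrable lborel g"
  proof -
    have "integrable lborel (\<lambda>x. indicator S x *\<^sub>R g x)"
      by (rule borel_integrable_compact[OF S(1)]) (rule continuous_on_subset[OF cg], simp)
    moreover have "(\<lambda>x. indicator S x *\<^sub>R g x) = g" using S(2) by (force simp: indicator_def)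
    ultimately show ?thesis by simp
  qed
  have transl: "integral\<^sup>L lborel (\<lambda>x. g (x + c)) = integral\<^sup>L lborel g" for c
  proof -
    have "integral\<^sup>L lborel g = integral\<^sup>L (distr lborel borel ((+) c)) g" by (simp add: lborel_distr_plus)
    also have "\<dots> = integral\<^sup>L lborel (\<lambda>x. g (c + x))"
      by (rule integral_distr) (auto intro: borel_measurable_continuous_onI cg)
    finally show ?thesis by (simp add: add.commute)
  qed
  have gintc: "integrable lborel (\<lambda>x. g (x + c))" for c
  proof -
    have "integrable (distr lborel borel ((+) c)) g" using gint by (simp add: lborel_distr_plus)
    then have "integrable lborel (\<lambda>x. g (c + x))"
      by (subst integrable_distr_eq[symmetric]) (auto intro: borel_measurable_continuous_onI cg)
    then show ?thesis by (simp add: add.commute)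
  qed
  have Qint0: "integral\<^sup>L lborel (Q n) = 0" for n
  proof -
    have "integral\<^sup>L lborel (Q n) = (integral\<^sup>L lborel (\<lambda>x. g (x + hn n *\<^sub>R e)) - integral\<^sup>L lborel g) / hn n"
      unfolding Q_def using gint gintc by simp
    then show ?thesis using transl by simp
  qed
  have hn_lim: "filterlim hn (at 0) sequentially"
  proof -
    have "hn \<longlonglongrightarrow> 0" unfolding hn_def by (rule LIMSEQ_Suc[OF lim_inverse_n'])
    moreover have "eventually (\<lambda>n. hn n \<in> UNIV \<and> hn n \<noteq> 0) sequentially" using hn_pos by (simp add: less_imp_neq[symmetric])
    ultimately show ?thesis unfolding filterlim_at by auto
  qed
  have Qlim: "(\<lambda>n. Q n x) \<longlonglongrightarrow> ge x" for x
  proof -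
    have "((\<lambda>h. (g (x + (0 + h) *\<^sub>R e) - g (x + 0 *\<^sub>R e)) / h) \<longlongrightarrow> ge x) (at 0)"
      using D[of x] unfolding DERIV_def .
    from filterlim_compose[OF this hn_lim] show ?thesis unfolding Q_def by simp
  qed
  have meas_ge: "ge \<in> borel_measurable lborel" using cge by (auto intro: borel_measurable_continuous_onI)
  have meas_Q: "Q n \<in> borel_measurable lborel" for n
    unfolding Q_def by (intro borel_measurable_divide borel_measurable_diff) (auto intro!: borel_measurable_continuous_onI continuous_on_compose2[OF cg] continuous_intros)
  have wint: "integrable lborel (\<lambda>x. B * indicator S2 x)"
    using S2c emeasure_compact_finite[OF S2c] borel_compact[OF S2c]
    by (intro integrable_mult_right integrable_real_indicator) (auto simp: less_top)
  have A1: "integrable lborel ge"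
    by (rule integrable_dominated_convergence[where s=Q, OF meas_ge meas_Q wint]) (use Qlim Qb in auto)
  have "(\<lambda>n. integral\<^sup>L lborel (Q n)) \<longlonglongrightarrow> integral\<^sup>L lborel ge"
    by (rule integral_dominated_convergence[where s=Q, OF meas_ge meas_Q wint]) (use Qlim Qb in auto)
  then have "integral\<^sup>L lborel ge = 0" using Qint0 by (simp add: LIMSEQ_const_iff)
  with A1 show ?thesis by simp
qed



lemma open_IntDom: "open (IntDom :: (real \<times> real \<times> (real^'n)) set)"
  unfolding IntDom_def by (intro open_Times open_greaterThanLessThan open_UNIV)

lemma IntDom_sub: "(IntDom :: (real \<times> real \<times> (real^'n)) set) \<subseteq> Dom"
  unfolding IntDom_def Dom_def by auto

lemma IntDom_iff: "((s,t,x) \<in> IntDom) \<longleftrightarrow> s \<in> {0<..<1} \<and> t \<in> {0<..<1}"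
  unfolding IntDom_def by auto

lemma C1_int:
  fixes f :: "real \<Rightarrow> real \<Rightarrow> real^'n \<Rightarrow> 'b::real_normed_vector"
  assumes "C1_on Dom (unc f)"
  obtains D where "\<And>p. p \<in> IntDom \<Longrightarrow> (unc f has_derivative blinfun_apply (D p)) (at p)"
    "continuous_on IntDom D" "continuous_on IntDom (unc f)"
proof -
  obtain D where D: "\<And>p. p \<in> Dom \<Longrightarrow> (unc f has_derivative blinfun_apply (D p)) (at p within Dom)"
    "continuous_on Dom D"
    using assms unfolding C1_on_def by blast
  have int: "p \<in> interior Dom" if "p \<in> IntDom" for p
    using that open_IntDom IntDom_sub interior_maximal by blast
  have D1: "(unc f has_derivative blinfun_apply (D p)) (at p)" if "p \<in> IntDom" for p
    using D(1)[of p] IntDom_sub that unfolding at_within_interior[OF int[OF that]] by auto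
  have "continuous_on IntDom (unc f)"
    by (intro continuous_at_imp_continuous_on ballI has_derivative_continuous[OF D1])
  then show ?thesis using that[OF D1 continuous_on_subset[OF D(2) IntDom_sub]] by simp
qed

lemma test_ext:
  fixes f :: "real \<Rightarrow> real \<Rightarrow> real^'n \<Rightarrow> 'b::real_normed_vector"
  assumes "test_fun f"
  obtains D K where "\<And>p. (unc f has_derivative blinfun_apply (D p)) (at p)"
    "continuous_on UNIV D" "continuous_on UNIV (unc f)" "compact K" "K \<subseteq> IntDom"
    "\<And>p. p \<notin> K \<Longrightarrow> unc f p = 0" "\<And>p. p \<notin> K \<Longrightarrow> D p = 0"
proof -
  obtain D where D: "\<And>p. (unc f has_derivative blinfun_apply (D p)) (at p)" "continuous_on UNIV D"
    using assms unfolding test_fun_def C1_on_def by auto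
  obtain K where K: "compact K" "K \<subseteq> IntDom" "\<And>p. p \<notin> K \<Longrightarrow> unc f p = 0"
    using assms unfolding test_fun_def by auto
  have "continuous_on UNIV (unc f)"
    by (intro continuous_at_imp_continuous_on ballI has_derivative_continuous[OF D(1)])
  moreover have "D p = 0" if "p \<notin> K" for p
  proof -
    have "open (-K)" using K(1) compact_imp_closed by auto
    have "((\<lambda>_. 0) has_derivative blinfun_apply (D p)) (at p)"
      by (rule has_derivative_transform_within_open[OF D(1) \<open>open (-K)\<close>]) (use that K in auto)
    moreover have "((\<lambda>_. 0::'b) has_derivative (\<lambda>_. 0)) (at p)" by simp
    ultimately have "blinfun_apply (D p) = (\<lambda>_. 0)" by (rule has_derivative_unique)
    then show ?thesis by (intro blinfun_eqI) simp
  qed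
  ultimately show ?thesis using that[OF D(1) D(2) _ K] by simp
qed

lemma a1: "((\<lambda>\<sigma>::real. (\<sigma>,t::real,x::real^'n)) has_derivative (\<lambda>h. (h,0,0))) (at s)"
  by (intro has_derivative_Pair has_derivative_ident has_derivative_const)
lemma a2: "((\<lambda>\<tau>::real. (s::real,\<tau>,x::real^'n)) has_derivative (\<lambda>h. (0,h,0))) (at t)"
  by (intro has_derivative_Pair has_derivative_ident has_derivative_const)
lemma a3: "((\<lambda>h::real. (s::real,t::real,x + h *\<^sub>R e::real^'n)) has_derivative (\<lambda>h. (0,0,h *\<^sub>R e))) (at 0)"
proof -
  have "((\<lambda>h::real. x + h *\<^sub>R e) has_derivative (\<lambda>h. 0 + h *\<^sub>R e)) (at 0)"
    by (intro has_derivative_add has_derivative_const has_derivative_scaleR_left has_derivative_ident)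
  then show ?thesis by (intro has_derivative_Pair has_derivative_const) simp_all
qed

lemma partials:
  fixes f :: "real \<Rightarrow> real \<Rightarrow> real^'n \<Rightarrow> 'b::real_normed_vector"
  assumes "(unc f has_derivative blinfun_apply D) (at (s,t,x))"
  shows "((\<lambda>\<sigma>. f \<sigma> t x) has_vector_derivative blinfun_apply D (1,0,0)) (at s)"
    and "((\<lambda>\<tau>. f s \<tau> x) has_vector_derivative blinfun_apply D (0,1,0)) (at t)"
    and "((\<lambda>h. f s t (x + h *\<^sub>R e)) has_vector_derivative blinfun_apply D (0,0,e)) (at 0)"
proof -
  have "((\<lambda>\<sigma>. unc f (\<sigma>,t,x)) has_derivative (\<lambda>h. blinfun_apply D (h,0,0))) (at s)"
    using has_derivative_compose[OF a1 assms] by (simp add: o_def)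
  moreover have "(\<lambda>h. blinfun_apply D (h,0,0)) = (\<lambda>h. h *\<^sub>R blinfun_apply D (1,0,0))"
    by (rule ext, subst blinfun.scaleR_right[symmetric]) simp
  ultimately show "((\<lambda>\<sigma>. f \<sigma> t x) has_vector_derivative blinfun_apply D (1,0,0)) (at s)"
    unfolding has_vector_derivative_def unc_def by (simp only: case_prod_conv)
next
  have "((\<lambda>\<tau>. unc f (s,\<tau>,x)) has_derivative (\<lambda>h. blinfun_apply D (0,h,0))) (at t)"
    using has_derivative_compose[OF a2 assms] by (simp add: o_def)
  moreover have "(\<lambda>h. blinfun_apply D (0,h,0)) = (\<lambda>h. h *\<^sub>R blinfun_apply D (0,1,0))"
    by (rule ext, subst blinfun.scaleR_right[symmetric]) simp
  ultimately show "((\<lambda>\<tau>. f s \<tau> x) has_vector_derivative blinfun_apply D (0,1,0)) (at t)"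
    unfolding has_vector_derivative_def unc_def by (simp only: case_prod_conv)
next
  have "((\<lambda>h. unc f (s,t,x + h *\<^sub>R e)) has_derivative (\<lambda>h. blinfun_apply D (0,0,h *\<^sub>R e))) (at 0)"
    using has_derivative_compose[OF a3, of "unc f"] assms by (simp add: o_def)
  moreover have "(\<lambda>h. blinfun_apply D (0,0,h *\<^sub>R e)) = (\<lambda>h. h *\<^sub>R blinfun_apply D (0,0,e))"
    by (rule ext, subst blinfun.scaleR_right[symmetric]) simp
  ultimately show "((\<lambda>h. f s t (x + h *\<^sub>R e)) has_vector_derivative blinfun_apply D (0,0,e)) (at 0)"
    unfolding has_vector_derivative_def unc_def by (simp only: case_prod_conv)
qed

lemma vd_real: "((f::real\<Rightarrow>real) has_vector_derivative d) F \<Longrightarrow> (f has_real_derivative d) F"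
  by (simp add: has_real_derivative_iff_has_vector_derivative)

lemma vd_nth: "((f::real\<Rightarrow>real^'n) has_vector_derivative d) F \<Longrightarrow> ((\<lambda>h. f h $ i) has_real_derivative d $ i) F"
proof -
  assume "(f has_vector_derivative d) F"
  then have "(f has_derivative (\<lambda>h. h *\<^sub>R d)) F" by (simp add: has_vector_derivative_def)
  from bounded_linear.has_derivative[OF bounded_linear_vec_nth this, of i]
  have "((\<lambda>h. f h $ i) has_derivative (\<lambda>x. x * d $ i)) F" by simp
  moreover have "(\<lambda>x. x * d $ i) = (*) (d $ i)" by (auto simp: mult.commute)
  ultimately show ?thesis by (simp add: has_field_derivative_def)
qed

lemma divg_formula:
  fixes f :: "real \<Rightarrow> real \<Rightarrow> real^'n \<Rightarrow> real" and w :: "real \<Rightarrow> real \<Rightarrow> real^'n \<Rightarrow> real^'n"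
  assumes "\<And>i. ((\<lambda>h. f s t (x + h *\<^sub>R axis i 1)) has_real_derivative fd i) (at 0)"
    "\<And>i. ((\<lambda>h. w s t (x + h *\<^sub>R axis i 1) $ i) has_real_derivative wd i) (at 0)"
  shows "divg (\<lambda>s t x. f s t x *\<^sub>R w s t x) s t x = (\<Sum>i\<in>UNIV. fd i * w s t x $ i + f s t x * wd i)"
  unfolding divg_def
proof (rule sum.cong[OF refl])
  fix i
  have "((\<lambda>h. f s t (x + h *\<^sub>R axis i 1) * w s t (x + h *\<^sub>R axis i 1) $ i) has_real_derivative
     fd i * w s t (x + 0 *\<^sub>R axis i 1) $ i + f s t (x + 0 *\<^sub>R axis i 1) * wd i) (at 0)"
    using DERIV_mult[OF assms(1) assms(2)] by (simp add: mult.commute)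
  then show "deriv (\<lambda>h. (f s t (x + h *\<^sub>R axis i 1) *\<^sub>R w s t (x + h *\<^sub>R axis i 1)) $ i) 0 =
      fd i * w s t x $ i + f s t x * wd i"
    by (intro DERIV_imp_deriv) simp
qed

lemma int_cs:
  fixes f :: "'a::euclidean_space \<Rightarrow> real"
  assumes "continuous_on UNIV f" "compact C" "\<And>x. x \<notin> C \<Longrightarrow> f x = 0"
  shows "integrable lborel f"
proof -
  have "integrable lborel (\<lambda>x. indicator C x *\<^sub>R f x)"
    by (rule borel_integrable_compact[OF assms(2)]) (rule continuous_on_subset[OF assms(1)], simp)
  moreover have "(\<lambda>x. indicator C x *\<^sub>R f x) = f" using assms(3) by (force simp: indicator_def)
  ultimately show ?thesis by simp
qed

lemma poly3_int:
  fixes f0 f1 f2 f3 :: "'a \<Rightarrow> real"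
  assumes "integrable M f0" "integrable M f1" "integrable M f2" "integrable M f3"
  shows "((\<lambda>\<epsilon>. integral\<^sup>L M (\<lambda>x. f0 x + \<epsilon> * f1 x + \<epsilon>^2 * f2 x + \<epsilon>^3 * f3 x)) has_real_derivative integral\<^sup>L M f1) (at 0)"
proof -
  have "integral\<^sup>L M (\<lambda>x. f0 x + \<epsilon> * f1 x + \<epsilon>^2 * f2 x + \<epsilon>^3 * f3 x) =
     integral\<^sup>L M f0 + \<epsilon> * integral\<^sup>L M f1 + \<epsilon>^2 * integral\<^sup>L M f2 + \<epsilon>^3 * integral\<^sup>L M f3" for \<epsilon>
    using assms by simp
  moreover have "((\<lambda>\<epsilon>. integral\<^sup>L M f0 + \<epsilon> * integral\<^sup>L M f1 + \<epsilon>^2 * integral\<^sup>L M f2 + \<epsilon>^3 * integral\<^sup>L M f3)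
     has_real_derivative integral\<^sup>L M f1) (at 0)"
    by (auto intro!: derivative_eq_intros)
  ultimately show ?thesis by simp
qed

lemma poly2_prod:
  fixes A B C0 C1 C2 :: real
  shows "((\<lambda>\<epsilon>. (A + \<epsilon> * B) * (C0 + \<epsilon> * C1 + \<epsilon>^2 * C2)) has_real_derivative A * C1 + B * C0) (at 0)"
  by (auto intro!: derivative_eq_intros)



lemma norm_pert:
  fixes v w :: "'a::real_inner" and e R r :: real
  shows "(norm (v + e *\<^sub>R w))\<^sup>2 * (R + e * r) = (norm v)\<^sup>2 * R + e * (2 * (v \<bullet> w) * R + (norm v)\<^sup>2 * r)
     + e^2 * ((norm w)\<^sup>2 * R + 2 * (v \<bullet> w) * r) + e^3 * ((norm w)\<^sup>2 * r)"
proof -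
  have "(norm (v + e *\<^sub>R w))\<^sup>2 = (norm v)\<^sup>2 + 2 * e * (v \<bullet> w) + e^2 * (norm w)\<^sup>2"
    by (simp only: power2_norm_eq_inner) (simp add: inner_add_left inner_add_right inner_commute[of w v] power2_eq_square algebra_simps)
  then show ?thesis by (simp add: algebra_simps power2_eq_square power3_eq_cube)
qed

lemma inner_pert:
  fixes v w u z :: "'a::real_inner" and e R r :: real
  shows "((v + e *\<^sub>R w) \<bullet> (u + e *\<^sub>R z)) * (R + e * r) = (v \<bullet> u) * R + e * (((v \<bullet> z) + (w \<bullet> u)) * R + (v \<bullet> u) * r)
     + e^2 * ((w \<bullet> z) * R + ((v \<bullet> z) + (w \<bullet> u)) * r) + e^3 * ((w \<bullet> z) * r)"
  by (simp add: inner_add_left inner_add_right algebra_simps power2_eq_square power3_eq_cube)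

lemma sum_expand:
  fixes A B C D G H :: "'i \<Rightarrow> real" and E F e :: real
  shows "(\<Sum>i\<in>I. (A i + e * B i) * (C i + e * D i) + (E + e * F) * (G i + e * H i)) =
    (\<Sum>i\<in>I. A i * C i + E * G i) + e * (\<Sum>i\<in>I. A i * D i + B i * C i + E * H i + F * G i)
    + e^2 * (\<Sum>i\<in>I. B i * D i + F * H i)"
proof -
  have "(A i + e * B i) * (C i + e * D i) + (E + e * F) * (G i + e * H i) =
    (A i * C i + E * G i) + e * (A i * D i + B i * C i + E * H i + F * G i) + e^2 * (B i * D i + F * H i)" for i
    by (simp add: algebra_simps power2_eq_square)
  then have "(\<Sum>i\<in>I. (A i + e * B i) * (C i + e * D i) + (E + e * F) * (G i + e * H i)) =
    (\<Sum>i\<in>I. (A i * C i + E * G i) + e * (A i * D i + B i * C i + E * H i + F * G i) + e^2 * (B i * D i + F * H i))"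
    by (intro sum.cong) simp_all
  also have "\<dots> = (\<Sum>i\<in>I. A i * C i + E * G i) + (\<Sum>i\<in>I. e * (A i * D i + B i * C i + E * H i + F * G i))
     + (\<Sum>i\<in>I. e^2 * (B i * D i + F * H i))"
    by (simp only: sum.distrib)
  also have "\<dots> = (\<Sum>i\<in>I. A i * C i + E * G i) + e * (\<Sum>i\<in>I. A i * D i + B i * C i + E * H i + F * G i)
    + e^2 * (\<Sum>i\<in>I. B i * D i + F * H i)"
    by (simp only: sum_distrib_left)
  finally show ?thesis .
qed

lemma lag_poly:
  fixes A B X0 X1 S0 S1 S2 A' B' Y0 Y1 T0 T1 T2 :: real
  shows "((\<lambda>e. (A + e * B) * ((X0 + e * X1) + (S0 + e * S1 + e^2 * S2)) + (A' + e * B') * ((Y0 + e * Y1) + (T0 + e * T1 + e^2 * T2)))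
     has_real_derivative (A * (X1 + S1) + B * (X0 + S0) + A' * (Y1 + T1) + B' * (Y0 + T0))) (at 0)"
proof -
  have eq: "(\<lambda>e. (A + e * B) * ((X0 + e * X1) + (S0 + e * S1 + e^2 * S2)) + (A' + e * B') * ((Y0 + e * Y1) + (T0 + e * T1 + e^2 * T2)))
    = (\<lambda>e. (A + e * B) * ((X0 + S0) + e * (X1 + S1) + e^2 * S2) + (A' + e * B') * ((Y0 + T0) + e * (Y1 + T1) + e^2 * T2))"
    by (rule ext) (simp add: algebra_simps)
  show ?thesis unfolding eq
    using DERIV_add[OF poly2_prod[of A B "X0 + S0" "X1 + S1" S2] poly2_prod[of A' B' "Y0 + T0" "Y1 + T1" T2]]
    by (simp add: add.assoc)
qed

lemma pointwise_alg:
  fixes VS VT a b gS gT :: "'v::real_inner"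
  assumes gS: "gS = c *\<^sub>R (gtt *\<^sub>R VS - gst *\<^sub>R VT)" and gT: "gT = c *\<^sub>R (gss *\<^sub>R VT - gst *\<^sub>R VS)"
    and HJ: "PSs + PTt + c * (1/2 * (norm VS)\<^sup>2 * gtt + 1/2 * (norm VT)\<^sup>2 * gss - (VT \<bullet> VS) * gst) = 0"
  shows "c / 2 * ((2 * (VS \<bullet> a) * R + (norm VS)\<^sup>2 * r) * gtt + (2 * (VT \<bullet> b) * R + (norm VT)\<^sup>2 * r) * gss
            - 2 * (((VS \<bullet> b) + (a \<bullet> VT)) * R + (VS \<bullet> VT) * r) * gst)
      + (Ps * rs + Pt * rt - gS \<bullet> (r *\<^sub>R VS + R *\<^sub>R a) - gT \<bullet> (r *\<^sub>R VT + R *\<^sub>R b))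
    = PSs * r + Ps * rs + PTt * r + Pt * rt"
proof -
  have HJ': "PSs + PTt = - c * (1/2 * (VS \<bullet> VS) * gtt + 1/2 * (VT \<bullet> VT) * gss - (VS \<bullet> VT) * gst)"
    using HJ by (simp add: power2_norm_eq_inner inner_commute[of VT VS] algebra_simps)
  have PT: "PTt = - c * (1/2 * (VS \<bullet> VS) * gtt + 1/2 * (VT \<bullet> VT) * gss - (VS \<bullet> VT) * gst) - PSs"
    using HJ' by simp
  show ?thesis unfolding gS gT PT
    by (simp add: power2_norm_eq_inner inner_add_left inner_add_right inner_diff_left inner_diff_right
       inner_commute[of a VS] inner_commute[of b VT] inner_commute[of a VT] inner_commute[of b VS] inner_commute[of VT VS]
       field_simps)
qed



lemma cont_slice:
  fixes F :: "real \<times> real \<times> (real^'n) \<Rightarrow> 'b::topological_space"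
  assumes "continuous_on IntDom F" "s \<in> {0<..<1}" "t \<in> {0<..<1}"
  shows "continuous_on UNIV (\<lambda>x. F (s,t,x))"
  by (rule continuous_on_compose2[OF assms(1), of UNIV "\<lambda>x. (s,t,x)"])
     (use assms(2,3) in \<open>auto intro!: continuous_intros simp: IntDom_iff\<close>)

lemma cont_slice_g:
  fixes F :: "real \<times> real \<times> (real^'n) \<Rightarrow> 'b::topological_space"
  assumes "continuous_on UNIV F"
  shows "continuous_on UNIV (\<lambda>x. F (s,t,x))"
  by (rule continuous_on_compose2[OF assms(1), of UNIV "\<lambda>x. (s,t,x)"]) (auto intro!: continuous_intros)

lemma unc_app: "unc f (s,t,x) = f s t x" by (simp add: unc_def)

lemma pert0: "pert f 0 g = f" by (simp add: pert_def)

lemma DERIV_eq: "(f has_real_derivative a) F \<Longrightarrow> a = b \<Longrightarrow> (f has_real_derivative b) F" by simp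

lemma Gst_sym: "Gst rho v w s t = Gst rho w v s t"
  unfolding Gst_def by (simp add: inner_commute)

lemma per_st:
  fixes rho Ps Pt r p q :: "real \<Rightarrow> real \<Rightarrow> real^'n \<Rightarrow> real"
    and vs vt a b :: "real \<Rightarrow> real \<Rightarrow> real^'n \<Rightarrow> real^'n"
    and Drho DPs DPt Dr :: "real \<times> real \<times> (real^'n) \<Rightarrow> (real \<times> real \<times> (real^'n)) \<Rightarrow>\<^sub>L real"
    and Dvs Dvt Da Db :: "real \<times> real \<times> (real^'n) \<Rightarrow> (real \<times> real \<times> (real^'n)) \<Rightarrow>\<^sub>L (real^'n)"
  assumes st: "s \<in> {0<..<1}" "t \<in> {0<..<1}"
    and dRho: "\<And>z. z \<in> IntDom \<Longrightarrow> (unc rho has_derivative blinfun_apply (Drho z)) (at z)"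
    and cRho: "continuous_on IntDom Drho" "continuous_on IntDom (unc rho)"
    and dVs: "\<And>z. z \<in> IntDom \<Longrightarrow> (unc vs has_derivative blinfun_apply (Dvs z)) (at z)"
    and cVs: "continuous_on IntDom Dvs" "continuous_on IntDom (unc vs)"
    and dVt: "\<And>z. z \<in> IntDom \<Longrightarrow> (unc vt has_derivative blinfun_apply (Dvt z)) (at z)"
    and cVt: "continuous_on IntDom Dvt" "continuous_on IntDom (unc vt)"
    and dPs: "\<And>z. z \<in> IntDom \<Longrightarrow> (unc Ps has_derivative blinfun_apply (DPs z)) (at z)"
    and cPs: "continuous_on IntDom DPs" "continuous_on IntDom (unc Ps)"
    and dPt: "\<And>z. z \<in> IntDom \<Longrightarrow> (unc Pt has_derivative blinfun_apply (DPt z)) (at z)"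
    and cPt: "continuous_on IntDom DPt" "continuous_on IntDom (unc Pt)"
    and dR: "\<And>z. (unc r has_derivative blinfun_apply (Dr z)) (at z)"
    and cR: "continuous_on UNIV Dr" "continuous_on UNIV (unc r)"
    and dA: "\<And>z. (unc a has_derivative blinfun_apply (Da z)) (at z)"
    and cA: "continuous_on UNIV Da" "continuous_on UNIV (unc a)"
    and dB: "\<And>z. (unc b has_derivative blinfun_apply (Db z)) (at z)"
    and cB: "continuous_on UNIV Db" "continuous_on UNIV (unc b)"
    and K: "compact K" "K \<subseteq> IntDom"
    and Kz: "\<And>z. z \<notin> K \<Longrightarrow> unc r z = 0" "\<And>z. z \<notin> K \<Longrightarrow> unc a z = 0" "\<And>z. z \<notin> K \<Longrightarrow> unc b z = 0"
            "\<And>z. z \<notin> K \<Longrightarrow> Dr z = 0" "\<And>z. z \<notin> K \<Longrightarrow> Da z = 0" "\<And>z. z \<notin> K \<Longrightarrow> Db z = 0"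
    and dens: "\<And>x. rho s t x \<ge> 0"
    and en: "integrable lborel (\<lambda>x. (norm (vs s t x))\<^sup>2 * rho s t x)"
            "integrable lborel (\<lambda>x. (norm (vt s t x))\<^sup>2 * rho s t x)"
    and Apos: "Aarea rho vs vt s t > 0"
    and gradPs: "\<And>x. inverse (Aarea rho vs vt s t) *\<^sub>R (Gss rho vt s t *\<^sub>R vs s t x - Gst rho vs vt s t *\<^sub>R vt s t x)
          = grad Ps s t x"
    and gradPt: "\<And>x. inverse (Aarea rho vs vt s t) *\<^sub>R (Gss rho vs s t *\<^sub>R vt s t x - Gst rho vs vt s t *\<^sub>R vs s t x)
          = grad Pt s t x"
    and HJ: "\<And>x. ds Ps s t x + dt Pt s t x
        + inverse (Aarea rho vs vt s t) *
            (1/2 * (norm (vs s t x))\<^sup>2 * Gss rho vt s t + 1/2 * (norm (vt s t x))\<^sup>2 * Gss rho vs s t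
             - (vt s t x \<bullet> vs s t x) * Gst rho vt vs s t) = 0"
    and cont_s: "\<And>x. ds rho s t x + divg (\<lambda>s t x. rho s t x *\<^sub>R vs s t x) s t x = 0"
    and cont_t: "\<And>x. dt rho s t x + divg (\<lambda>s t x. rho s t x *\<^sub>R vt s t x) s t x = 0"
  shows "(\<lambda>\<epsilon>. Aarea (pert rho \<epsilon> r) (pert vs \<epsilon> a) (pert vt \<epsilon> b) s t) differentiable (at 0)
    \<and> (\<forall>x. (\<lambda>\<epsilon>. lag_density (pert rho \<epsilon> r) (pert vs \<epsilon> a) (pert vt \<epsilon> b) (pert Ps \<epsilon> p) (pert Pt \<epsilon> q) s t x) differentiable (at 0))
    \<and> integrable lborel (\<lambda>x. deriv (\<lambda>\<epsilon>. lag_density (pert rho \<epsilon> r) (pert vs \<epsilon> a) (pert vt \<epsilon> b) (pert Ps \<epsilon> p) (pert Pt \<epsilon> q) s t x) 0)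
    \<and> first_var_integrand rho vs vt Ps Pt r a b p q s t = (LINT x|lborel. blinfun_apply (DPs (s,t,x)) (1,0,0) * r s t x + Ps s t x * blinfun_apply (Dr (s,t,x)) (1,0,0) + blinfun_apply (DPt (s,t,x)) (0,1,0) * r s t x + Pt s t x * blinfun_apply (Dr (s,t,x)) (0,1,0))"
proof -
  have P: "(s,t,x) \<in> IntDom" for x using st by (simp add: IntDom_iff)
  define KX where "KX = (\<lambda>z. snd (snd z)) ` K"
  have KXc: "compact KX" unfolding KX_def by (intro compact_continuous_image K(1) continuous_intros)
  have KX: "(s,t,x) \<notin> K" if "x \<notin> KX" for x using that unfolding KX_def by force
  have r0: "r s t x = 0" "a s t x = 0" "b s t x = 0" "Dr (s,t,x) = 0" "Da (s,t,x) = 0" "Db (s,t,x) = 0"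
    if "x \<notin> KX" for x
    using Kz[OF KX[OF that]] by (auto simp: unc_def)
  have rho_s: "((\<lambda>\<sigma>. rho \<sigma> t x) has_real_derivative blinfun_apply (Drho (s,t,x)) (1,0,0)) (at s)" for x
    by (rule vd_real[OF partials(1)[OF dRho[OF P]]])
  have rho_t: "((\<lambda>\<tau>. rho s \<tau> x) has_real_derivative blinfun_apply (Drho (s,t,x)) (0,1,0)) (at t)" for x
    by (rule vd_real[OF partials(2)[OF dRho[OF P]]])
  have rho_x: "((\<lambda>h. rho s t (x + h *\<^sub>R e)) has_real_derivative blinfun_apply (Drho (s,t,x)) (0,0,e)) (at 0)" for x e
    by (rule vd_real[OF partials(3)[OF dRho[OF P]]])
  have Ps_s: "((\<lambda>\<sigma>. Ps \<sigma> t x) has_real_derivative blinfun_apply (DPs (s,t,x)) (1,0,0)) (at s)" for x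
    by (rule vd_real[OF partials(1)[OF dPs[OF P]]])
  have Ps_x: "((\<lambda>h. Ps s t (x + h *\<^sub>R e)) has_real_derivative blinfun_apply (DPs (s,t,x)) (0,0,e)) (at 0)" for x e
    by (rule vd_real[OF partials(3)[OF dPs[OF P]]])
  have Pt_t: "((\<lambda>\<tau>. Pt s \<tau> x) has_real_derivative blinfun_apply (DPt (s,t,x)) (0,1,0)) (at t)" for x
    by (rule vd_real[OF partials(2)[OF dPt[OF P]]])
  have Pt_x: "((\<lambda>h. Pt s t (x + h *\<^sub>R e)) has_real_derivative blinfun_apply (DPt (s,t,x)) (0,0,e)) (at 0)" for x e
    by (rule vd_real[OF partials(3)[OF dPt[OF P]]])
  have r_s: "((\<lambda>\<sigma>. r \<sigma> t x) has_real_derivative blinfun_apply (Dr (s,t,x)) (1,0,0)) (at s)" for x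
    by (rule vd_real[OF partials(1)[OF dR]])
  have r_t: "((\<lambda>\<tau>. r s \<tau> x) has_real_derivative blinfun_apply (Dr (s,t,x)) (0,1,0)) (at t)" for x
    by (rule vd_real[OF partials(2)[OF dR]])
  have r_x: "((\<lambda>h. r s t (x + h *\<^sub>R e)) has_real_derivative blinfun_apply (Dr (s,t,x)) (0,0,e)) (at 0)" for x e
    by (rule vd_real[OF partials(3)[OF dR]])
  have vs_x: "((\<lambda>h. vs s t (x + h *\<^sub>R e) $ i) has_real_derivative blinfun_apply (Dvs (s,t,x)) (0,0,e) $ i) (at 0)" for x e i
    by (rule vd_nth[OF partials(3)[OF dVs[OF P]]])
  have vt_x: "((\<lambda>h. vt s t (x + h *\<^sub>R e) $ i) has_real_derivative blinfun_apply (Dvt (s,t,x)) (0,0,e) $ i) (at 0)" for x e i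
    by (rule vd_nth[OF partials(3)[OF dVt[OF P]]])
  have a_x: "((\<lambda>h. a s t (x + h *\<^sub>R e) $ i) has_real_derivative blinfun_apply (Da (s,t,x)) (0,0,e) $ i) (at 0)" for x e i
    by (rule vd_nth[OF partials(3)[OF dA]])
  have b_x: "((\<lambda>h. b s t (x + h *\<^sub>R e) $ i) has_real_derivative blinfun_apply (Db (s,t,x)) (0,0,e) $ i) (at 0)" for x e i
    by (rule vd_nth[OF partials(3)[OF dB]])
  have cx: "continuous_on UNIV (\<lambda>x. rho s t x)" "continuous_on UNIV (\<lambda>x. vs s t x)"
    "continuous_on UNIV (\<lambda>x. vt s t x)" "continuous_on UNIV (\<lambda>x. Ps s t x)" "continuous_on UNIV (\<lambda>x. Pt s t x)"
    "continuous_on UNIV (\<lambda>x. r s t x)" "continuous_on UNIV (\<lambda>x. a s t x)" "continuous_on UNIV (\<lambda>x. b s t x)"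
    using cont_slice[OF cRho(2) st] cont_slice[OF cVs(2) st] cont_slice[OF cVt(2) st]
      cont_slice[OF cPs(2) st] cont_slice[OF cPt(2) st]
      cont_slice_g[OF cR(2)] cont_slice_g[OF cA(2)] cont_slice_g[OF cB(2)]
    by (simp_all add: unc_app)
  have cD: "continuous_on UNIV (\<lambda>x. Drho (s,t,x))" "continuous_on UNIV (\<lambda>x. Dvs (s,t,x))"
    "continuous_on UNIV (\<lambda>x. Dvt (s,t,x))" "continuous_on UNIV (\<lambda>x. DPs (s,t,x))" "continuous_on UNIV (\<lambda>x. DPt (s,t,x))"
    "continuous_on UNIV (\<lambda>x. Dr (s,t,x))" "continuous_on UNIV (\<lambda>x. Da (s,t,x))" "continuous_on UNIV (\<lambda>x. Db (s,t,x))"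
    using cont_slice[OF cRho(1) st] cont_slice[OF cVs(1) st] cont_slice[OF cVt(1) st]
      cont_slice[OF cPs(1) st] cont_slice[OF cPt(1) st]
      cont_slice_g[OF cR(1)] cont_slice_g[OF cA(1)] cont_slice_g[OF cB(1)]
    by simp_all
  note cxs = cx cD
  define c1ss where "c1ss x = 2 * (vs s t x \<bullet> a s t x) * rho s t x + (norm (vs s t x))\<^sup>2 * r s t x" for x
  define c2ss where "c2ss x = (norm (a s t x))\<^sup>2 * rho s t x + 2 * (vs s t x \<bullet> a s t x) * r s t x" for x
  define c3ss where "c3ss x = (norm (a s t x))\<^sup>2 * r s t x" for x
  define c1tt where "c1tt x = 2 * (vt s t x \<bullet> b s t x) * rho s t x + (norm (vt s t x))\<^sup>2 * r s t x" for x
  define c2tt where "c2tt x = (norm (b s t x))\<^sup>2 * rho s t x + 2 * (vt s t x \<bullet> b s t x) * r s t x" for x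
  define c3tt where "c3tt x = (norm (b s t x))\<^sup>2 * r s t x" for x
  define c1st where "c1st x = ((vs s t x \<bullet> b s t x) + (a s t x \<bullet> vt s t x)) * rho s t x + (vs s t x \<bullet> vt s t x) * r s t x" for x
  define c2st where "c2st x = (a s t x \<bullet> b s t x) * rho s t x + ((vs s t x \<bullet> b s t x) + (a s t x \<bullet> vt s t x)) * r s t x" for x
  define c3st where "c3st x = (a s t x \<bullet> b s t x) * r s t x" for x
  have ic: "integrable lborel c1ss" "integrable lborel c2ss" "integrable lborel c3ss"
     "integrable lborel c1tt" "integrable lborel c2tt" "integrable lborel c3tt"
     "integrable lborel c1st" "integrable lborel c2st" "integrable lborel c3st"
    unfolding c1ss_def c2ss_def c3ss_def c1tt_def c2tt_def c3tt_def c1st_def c2st_def c3st_def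
    by (rule int_cs[OF _ KXc], (intro continuous_intros cxs), simp add: r0)+
  have i0st: "integrable lborel (\<lambda>x. (vs s t x \<bullet> vt s t x) * rho s t x)"
  proof (rule Bochner_Integration.integrable_bound[OF Bochner_Integration.integrable_add[OF en]])
    show "(\<lambda>x. (vs s t x \<bullet> vt s t x) * rho s t x) \<in> borel_measurable lborel"
      by (auto intro!: borel_measurable_continuous_onI continuous_intros cxs)
    show "AE x in lborel. norm ((vs s t x \<bullet> vt s t x) * rho s t x) \<le> norm ((norm (vs s t x))\<^sup>2 * rho s t x + (norm (vt s t x))\<^sup>2 * rho s t x)"
    proof (intro AE_I2)
      fix x
      have "\<bar>vs s t x \<bullet> vt s t x\<bar> \<le> norm (vs s t x) * norm (vt s t x)" by (rule Cauchy_Schwarz_ineq2)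
      also have "\<dots> \<le> (norm (vs s t x))\<^sup>2 + (norm (vt s t x))\<^sup>2"
        using sum_squares_bound[of "norm (vs s t x)" "norm (vt s t x)"]
          mult_nonneg_nonneg[OF norm_ge_zero norm_ge_zero, of "vs s t x" "vt s t x"] by linarith
      finally have "\<bar>vs s t x \<bullet> vt s t x\<bar> * rho s t x \<le> ((norm (vs s t x))\<^sup>2 + (norm (vt s t x))\<^sup>2) * rho s t x"
        using dens[of x] by (rule mult_right_mono)
      then show "norm ((vs s t x \<bullet> vt s t x) * rho s t x) \<le> norm ((norm (vs s t x))\<^sup>2 * rho s t x + (norm (vt s t x))\<^sup>2 * rho s t x)"
        using dens[of x] by (simp add: abs_mult algebra_simps)
    qed
  qed
  have Gss_eps: "Gss (pert rho \<epsilon> r) (pert vs \<epsilon> a) s t =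
     (LINT x|lborel. (norm (vs s t x))\<^sup>2 * rho s t x + \<epsilon> * c1ss x + \<epsilon>^2 * c2ss x + \<epsilon>^3 * c3ss x)" for \<epsilon>
    unfolding Gss_def pert_def c1ss_def c2ss_def c3ss_def by (simp only: real_scaleR_def norm_pert)
  have Gtt_eps: "Gss (pert rho \<epsilon> r) (pert vt \<epsilon> b) s t =
     (LINT x|lborel. (norm (vt s t x))\<^sup>2 * rho s t x + \<epsilon> * c1tt x + \<epsilon>^2 * c2tt x + \<epsilon>^3 * c3tt x)" for \<epsilon>
    unfolding Gss_def pert_def c1tt_def c2tt_def c3tt_def by (simp only: real_scaleR_def norm_pert)
  have Gst_eps: "Gst (pert rho \<epsilon> r) (pert vs \<epsilon> a) (pert vt \<epsilon> b) s t =
     (LINT x|lborel. (vs s t x \<bullet> vt s t x) * rho s t x + \<epsilon> * c1st x + \<epsilon>^2 * c2st x + \<epsilon>^3 * c3st x)" for \<epsilon>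
    unfolding Gst_def pert_def c1st_def c2st_def c3st_def by (simp only: real_scaleR_def inner_pert)
  have dGss: "((\<lambda>\<epsilon>. Gss (pert rho \<epsilon> r) (pert vs \<epsilon> a) s t) has_real_derivative integral\<^sup>L lborel c1ss) (at 0)"
    unfolding Gss_eps by (rule poly3_int[OF en(1) ic(1-3)])
  have dGtt: "((\<lambda>\<epsilon>. Gss (pert rho \<epsilon> r) (pert vt \<epsilon> b) s t) has_real_derivative integral\<^sup>L lborel c1tt) (at 0)"
    unfolding Gtt_eps by (rule poly3_int[OF en(2) ic(4-6)])
  have dGst: "((\<lambda>\<epsilon>. Gst (pert rho \<epsilon> r) (pert vs \<epsilon> a) (pert vt \<epsilon> b) s t) has_real_derivative integral\<^sup>L lborel c1st) (at 0)"
    unfolding Gst_eps by (rule poly3_int[OF i0st ic(7-9)])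
  define P where "P \<epsilon> = Gss (pert rho \<epsilon> r) (pert vs \<epsilon> a) s t * Gss (pert rho \<epsilon> r) (pert vt \<epsilon> b) s t
      - (Gst (pert rho \<epsilon> r) (pert vs \<epsilon> a) (pert vt \<epsilon> b) s t)\<^sup>2" for \<epsilon>
  have Aeq: "Aarea (pert rho \<epsilon> r) (pert vs \<epsilon> a) (pert vt \<epsilon> b) s t = sqrt (P \<epsilon>)" for \<epsilon>
    unfolding Aarea_def P_def ..
  have A0: "Aarea rho vs vt s t = sqrt (P 0)"
    unfolding Aarea_def P_def pert0 ..
  have Ppos: "P 0 > 0" using Apos A0 by simp
  have dP: "(P has_real_derivative (integral\<^sup>L lborel c1ss * Gss rho vt s t + integral\<^sup>L lborel c1tt * Gss rho vs s t
      - 2 * integral\<^sup>L lborel c1st * Gst rho vs vt s t)) (at 0)"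
    unfolding P_def
    by (rule DERIV_eq[OF DERIV_diff[OF DERIV_mult[OF dGss dGtt] DERIV_power[OF dGst, of 2]]]) (simp add: pert0)
  define A1 where "A1 = inverse (Aarea rho vs vt s t) / 2 * (integral\<^sup>L lborel c1ss * Gss rho vt s t
      + integral\<^sup>L lborel c1tt * Gss rho vs s t - 2 * integral\<^sup>L lborel c1st * Gst rho vs vt s t)"
  have dAr: "((\<lambda>\<epsilon>. Aarea (pert rho \<epsilon> r) (pert vs \<epsilon> a) (pert vt \<epsilon> b) s t) has_real_derivative A1) (at 0)"
    unfolding Aeq A0 A1_def using DERIV_chain2[OF DERIV_real_sqrt[OF Ppos] dP] by simp
  define e where "e x = inverse (Aarea rho vs vt s t) / 2 * (c1ss x * Gss rho vt s t + c1tt x * Gss rho vs s t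
      - 2 * c1st x * Gst rho vs vt s t)" for x
  have ie: "integrable lborel e" unfolding e_def using ic by simp
  have inte: "integral\<^sup>L lborel e = A1" unfolding e_def A1_def using ic by simp
  have ds_eq: "ds (pert rho \<epsilon> r) s t x = blinfun_apply (Drho (s,t,x)) (1,0,0) + \<epsilon> * blinfun_apply (Dr (s,t,x)) (1,0,0)" for \<epsilon> x
    unfolding ds_def pert_def real_scaleR_def by (rule DERIV_imp_deriv, rule DERIV_add[OF rho_s DERIV_cmult[OF r_s]])
  have dt_eq: "dt (pert rho \<epsilon> r) s t x = blinfun_apply (Drho (s,t,x)) (0,1,0) + \<epsilon> * blinfun_apply (Dr (s,t,x)) (0,1,0)" for \<epsilon> x
    unfolding dt_def pert_def real_scaleR_def by (rule DERIV_imp_deriv, rule DERIV_add[OF rho_t DERIV_cmult[OF r_t]])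
  have h_rho: "((\<lambda>h. pert rho \<epsilon> r s t (x + h *\<^sub>R axis i 1)) has_real_derivative blinfun_apply (Drho (s,t,x)) (0,0,axis i 1) + \<epsilon> * blinfun_apply (Dr (s,t,x)) (0,0,axis i 1)) (at 0)" for \<epsilon> x i
    unfolding pert_def real_scaleR_def by (rule DERIV_add[OF rho_x DERIV_cmult[OF r_x]])
  have h_vs: "((\<lambda>h. pert vs \<epsilon> a s t (x + h *\<^sub>R axis i 1) $ i) has_real_derivative blinfun_apply (Dvs (s,t,x)) (0,0,axis i 1) $ i + \<epsilon> * blinfun_apply (Da (s,t,x)) (0,0,axis i 1) $ i) (at 0)" for \<epsilon> x i
    unfolding pert_def vector_add_component vector_scaleR_component real_scaleR_def
    by (rule DERIV_add[OF vs_x DERIV_cmult[OF a_x]])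
  have h_vt: "((\<lambda>h. pert vt \<epsilon> b s t (x + h *\<^sub>R axis i 1) $ i) has_real_derivative blinfun_apply (Dvt (s,t,x)) (0,0,axis i 1) $ i + \<epsilon> * blinfun_apply (Db (s,t,x)) (0,0,axis i 1) $ i) (at 0)" for \<epsilon> x i
    unfolding pert_def vector_add_component vector_scaleR_component real_scaleR_def
    by (rule DERIV_add[OF vt_x DERIV_cmult[OF b_x]])
  have divg_s: "divg (\<lambda>s t x. pert rho \<epsilon> r s t x *\<^sub>R pert vs \<epsilon> a s t x) s t x =
     (\<Sum>i\<in>UNIV. (blinfun_apply (Drho (s,t,x)) (0,0,axis i 1) + \<epsilon> * blinfun_apply (Dr (s,t,x)) (0,0,axis i 1)) * (vs s t x $ i + \<epsilon> * a s t x $ i) + (rho s t x + \<epsilon> * r s t x) * (blinfun_apply (Dvs (s,t,x)) (0,0,axis i 1) $ i + \<epsilon> * blinfun_apply (Da (s,t,x)) (0,0,axis i 1) $ i))" for \<epsilon> x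
    unfolding divg_formula[where f="pert rho \<epsilon> r" and w="pert vs \<epsilon> a" and s=s and t=t and x=x
      and fd="\<lambda>i. blinfun_apply (Drho (s,t,x)) (0,0,axis i 1) + \<epsilon> * blinfun_apply (Dr (s,t,x)) (0,0,axis i 1)" and wd="\<lambda>i. blinfun_apply (Dvs (s,t,x)) (0,0,axis i 1) $ i + \<epsilon> * blinfun_apply (Da (s,t,x)) (0,0,axis i 1) $ i", OF h_rho h_vs] by (simp add: pert_def)
  have divg_t: "divg (\<lambda>s t x. pert rho \<epsilon> r s t x *\<^sub>R pert vt \<epsilon> b s t x) s t x =
     (\<Sum>i\<in>UNIV. (blinfun_apply (Drho (s,t,x)) (0,0,axis i 1) + \<epsilon> * blinfun_apply (Dr (s,t,x)) (0,0,axis i 1)) * (vt s t x $ i + \<epsilon> * b s t x $ i) + (rho s t x + \<epsilon> * r s t x) * (blinfun_apply (Dvt (s,t,x)) (0,0,axis i 1) $ i + \<epsilon> * blinfun_apply (Db (s,t,x)) (0,0,axis i 1) $ i))" for \<epsilon> x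
    unfolding divg_formula[where f="pert rho \<epsilon> r" and w="pert vt \<epsilon> b" and s=s and t=t and x=x
      and fd="\<lambda>i. blinfun_apply (Drho (s,t,x)) (0,0,axis i 1) + \<epsilon> * blinfun_apply (Dr (s,t,x)) (0,0,axis i 1)" and wd="\<lambda>i. blinfun_apply (Dvt (s,t,x)) (0,0,axis i 1) $ i + \<epsilon> * blinfun_apply (Db (s,t,x)) (0,0,axis i 1) $ i", OF h_rho h_vt] by (simp add: pert_def)
  have cs0: "blinfun_apply (Drho (s,t,x)) (1,0,0) + (\<Sum>i\<in>UNIV. blinfun_apply (Drho (s,t,x)) (0,0,axis i 1) * vs s t x $ i + rho s t x * blinfun_apply (Dvs (s,t,x)) (0,0,axis i 1) $ i) = 0" for x
    using cont_s[of x] divg_s[of 0 x] ds_eq[of 0 x] by (simp add: pert0)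
  have ct0: "blinfun_apply (Drho (s,t,x)) (0,1,0) + (\<Sum>i\<in>UNIV. blinfun_apply (Drho (s,t,x)) (0,0,axis i 1) * vt s t x $ i + rho s t x * blinfun_apply (Dvt (s,t,x)) (0,0,axis i 1) $ i) = 0" for x
    using cont_t[of x] divg_t[of 0 x] dt_eq[of 0 x] by (simp add: pert0)
  have lag_eq: "lag_density (pert rho \<epsilon> r) (pert vs \<epsilon> a) (pert vt \<epsilon> b) (pert Ps \<epsilon> p) (pert Pt \<epsilon> q) s t x =
     (Ps s t x + \<epsilon> * p s t x) * ((blinfun_apply (Drho (s,t,x)) (1,0,0) + \<epsilon> * blinfun_apply (Dr (s,t,x)) (1,0,0)) + ((\<Sum>i\<in>UNIV. blinfun_apply (Drho (s,t,x)) (0,0,axis i 1) * vs s t x $ i + rho s t x * blinfun_apply (Dvs (s,t,x)) (0,0,axis i 1) $ i) + \<epsilon> * (\<Sum>i\<in>UNIV. blinfun_apply (Drho (s,t,x)) (0,0,axis i 1) * a s t x $ i + blinfun_apply (Dr (s,t,x)) (0,0,axis i 1) * vs s t x $ i + rho s t x * blinfun_apply (Da (s,t,x)) (0,0,axis i 1) $ i + r s t x * blinfun_apply (Dvs (s,t,x)) (0,0,axis i 1) $ i) + \<epsilon>^2 * (\<Sum>i\<in>UNIV. blinfun_apply (Dr (s,t,x)) (0,0,axis i 1) * a s t x $ i + r s t x * blinfun_apply (Da (s,t,x)) (0,0,axis i 1) $ i)))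
     + (Pt s t x + \<epsilon> * q s t x) * ((blinfun_apply (Drho (s,t,x)) (0,1,0) + \<epsilon> * blinfun_apply (Dr (s,t,x)) (0,1,0)) + ((\<Sum>i\<in>UNIV. blinfun_apply (Drho (s,t,x)) (0,0,axis i 1) * vt s t x $ i + rho s t x * blinfun_apply (Dvt (s,t,x)) (0,0,axis i 1) $ i) + \<epsilon> * (\<Sum>i\<in>UNIV. blinfun_apply (Drho (s,t,x)) (0,0,axis i 1) * b s t x $ i + blinfun_apply (Dr (s,t,x)) (0,0,axis i 1) * vt s t x $ i + rho s t x * blinfun_apply (Db (s,t,x)) (0,0,axis i 1) $ i + r s t x * blinfun_apply (Dvt (s,t,x)) (0,0,axis i 1) $ i) + \<epsilon>^2 * (\<Sum>i\<in>UNIV. blinfun_apply (Dr (s,t,x)) (0,0,axis i 1) * b s t x $ i + r s t x * blinfun_apply (Db (s,t,x)) (0,0,axis i 1) $ i)))" for \<epsilon> x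
    unfolding lag_density_def ds_eq dt_eq divg_s divg_t sum_expand by (simp add: pert_def)
  define L1 where "L1 x = Ps s t x * (blinfun_apply (Dr (s,t,x)) (1,0,0) + (\<Sum>i\<in>UNIV. blinfun_apply (Drho (s,t,x)) (0,0,axis i 1) * a s t x $ i + blinfun_apply (Dr (s,t,x)) (0,0,axis i 1) * vs s t x $ i + rho s t x * blinfun_apply (Da (s,t,x)) (0,0,axis i 1) $ i + r s t x * blinfun_apply (Dvs (s,t,x)) (0,0,axis i 1) $ i)) + Pt s t x * (blinfun_apply (Dr (s,t,x)) (0,1,0) + (\<Sum>i\<in>UNIV. blinfun_apply (Drho (s,t,x)) (0,0,axis i 1) * b s t x $ i + blinfun_apply (Dr (s,t,x)) (0,0,axis i 1) * vt s t x $ i + rho s t x * blinfun_apply (Db (s,t,x)) (0,0,axis i 1) $ i + r s t x * blinfun_apply (Dvt (s,t,x)) (0,0,axis i 1) $ i))" for x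
  have dlag: "((\<lambda>\<epsilon>. lag_density (pert rho \<epsilon> r) (pert vs \<epsilon> a) (pert vt \<epsilon> b) (pert Ps \<epsilon> p) (pert Pt \<epsilon> q) s t x) has_real_derivative L1 x) (at 0)" for x
    unfolding lag_eq L1_def by (rule DERIV_eq[OF lag_poly]) (simp add: cs0 ct0)
  have iL1: "integrable lborel L1"
    unfolding L1_def by (rule int_cs[OF _ KXc], (intro continuous_intros cxs), simp add: r0)
  define ges where "ges i x = blinfun_apply (DPs (s,t,x)) (0,0,axis i 1) * (r s t x * vs s t x $ i + rho s t x * a s t x $ i)
      + Ps s t x * (blinfun_apply (Drho (s,t,x)) (0,0,axis i 1) * a s t x $ i + blinfun_apply (Dr (s,t,x)) (0,0,axis i 1) * vs s t x $ i + rho s t x * blinfun_apply (Da (s,t,x)) (0,0,axis i 1) $ i + r s t x * blinfun_apply (Dvs (s,t,x)) (0,0,axis i 1) $ i)" for i x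
  define get where "get i x = blinfun_apply (DPt (s,t,x)) (0,0,axis i 1) * (r s t x * vt s t x $ i + rho s t x * b s t x $ i)
      + Pt s t x * (blinfun_apply (Drho (s,t,x)) (0,0,axis i 1) * b s t x $ i + blinfun_apply (Dr (s,t,x)) (0,0,axis i 1) * vt s t x $ i + rho s t x * blinfun_apply (Db (s,t,x)) (0,0,axis i 1) $ i + r s t x * blinfun_apply (Dvt (s,t,x)) (0,0,axis i 1) $ i)" for i x
  have ibp_s: "integrable lborel (ges i) \<and> integral\<^sup>L lborel (ges i) = 0" for i
  proof (rule integral_partial_zero[where g="\<lambda>x. Ps s t x * (r s t x * vs s t x $ i + rho s t x * a s t x $ i)"
        and e="axis i 1", OF _ _ _ KXc])
    show "((\<lambda>h. Ps s t (x + h *\<^sub>R axis i 1) * (r s t (x + h *\<^sub>R axis i 1) * vs s t (x + h *\<^sub>R axis i 1) $ i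
        + rho s t (x + h *\<^sub>R axis i 1) * a s t (x + h *\<^sub>R axis i 1) $ i)) has_real_derivative ges i x) (at 0)" for x
      by (rule DERIV_eq[OF DERIV_mult[OF Ps_x DERIV_add[OF DERIV_mult[OF r_x vs_x] DERIV_mult[OF rho_x a_x]]]])
         (simp add: ges_def algebra_simps)
    show "continuous_on UNIV (ges i)" unfolding ges_def by (intro continuous_intros cxs)
    show "continuous_on UNIV (\<lambda>x. Ps s t x * (r s t x * vs s t x $ i + rho s t x * a s t x $ i))"
      by (intro continuous_intros cxs)
    show "Ps s t x * (r s t x * vs s t x $ i + rho s t x * a s t x $ i) = 0" if "x \<notin> KX" for x
      using that by (simp add: r0)
  qed
  have ibp_t: "integrable lborel (get i) \<and> integral\<^sup>L lborel (get i) = 0" for i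
  proof (rule integral_partial_zero[where g="\<lambda>x. Pt s t x * (r s t x * vt s t x $ i + rho s t x * b s t x $ i)"
        and e="axis i 1", OF _ _ _ KXc])
    show "((\<lambda>h. Pt s t (x + h *\<^sub>R axis i 1) * (r s t (x + h *\<^sub>R axis i 1) * vt s t (x + h *\<^sub>R axis i 1) $ i
        + rho s t (x + h *\<^sub>R axis i 1) * b s t (x + h *\<^sub>R axis i 1) $ i)) has_real_derivative get i x) (at 0)" for x
      by (rule DERIV_eq[OF DERIV_mult[OF Pt_x DERIV_add[OF DERIV_mult[OF r_x vt_x] DERIV_mult[OF rho_x b_x]]]])
         (simp add: get_def algebra_simps)
    show "continuous_on UNIV (get i)" unfolding get_def by (intro continuous_intros cxs)
    show "continuous_on UNIV (\<lambda>x. Pt s t x * (r s t x * vt s t x $ i + rho s t x * b s t x $ i))"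
      by (intro continuous_intros cxs)
    show "Pt s t x * (r s t x * vt s t x $ i + rho s t x * b s t x $ i) = 0" if "x \<notin> KX" for x
      using that by (simp add: r0)
  qed
  have grad_s: "grad Ps s t x = (\<chi> i. blinfun_apply (DPs (s,t,x)) (0,0,axis i 1))" for x
    unfolding grad_def using DERIV_imp_deriv[OF Ps_x] by simp
  have grad_t: "grad Pt s t x = (\<chi> i. blinfun_apply (DPt (s,t,x)) (0,0,axis i 1))" for x
    unfolding grad_def using DERIV_imp_deriv[OF Pt_x] by simp
  have ds_Ps: "ds Ps s t x = blinfun_apply (DPs (s,t,x)) (1,0,0)" for x unfolding ds_def by (rule DERIV_imp_deriv[OF Ps_s])
  have dt_Pt: "dt Pt s t x = blinfun_apply (DPt (s,t,x)) (0,1,0)" for x unfolding dt_def by (rule DERIV_imp_deriv[OF Pt_t])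
  have sum_s: "(\<Sum>i\<in>UNIV. ges i x) = grad Ps s t x \<bullet> (r s t x *\<^sub>R vs s t x + rho s t x *\<^sub>R a s t x) + Ps s t x * (\<Sum>i\<in>UNIV. blinfun_apply (Drho (s,t,x)) (0,0,axis i 1) * a s t x $ i + blinfun_apply (Dr (s,t,x)) (0,0,axis i 1) * vs s t x $ i + rho s t x * blinfun_apply (Da (s,t,x)) (0,0,axis i 1) $ i + r s t x * blinfun_apply (Dvs (s,t,x)) (0,0,axis i 1) $ i)" for x
  proof -
    have "(\<Sum>i\<in>UNIV. ges i x) = (\<Sum>i\<in>UNIV. blinfun_apply (DPs (s,t,x)) (0,0,axis i 1) * (r s t x * vs s t x $ i + rho s t x * a s t x $ i)) + Ps s t x * (\<Sum>i\<in>UNIV. blinfun_apply (Drho (s,t,x)) (0,0,axis i 1) * a s t x $ i + blinfun_apply (Dr (s,t,x)) (0,0,axis i 1) * vs s t x $ i + rho s t x * blinfun_apply (Da (s,t,x)) (0,0,axis i 1) $ i + r s t x * blinfun_apply (Dvs (s,t,x)) (0,0,axis i 1) $ i)"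
      unfolding ges_def sum_distrib_left by (rule sum.distrib)
    moreover have "(\<Sum>i\<in>UNIV. blinfun_apply (DPs (s,t,x)) (0,0,axis i 1) * (r s t x * vs s t x $ i + rho s t x * a s t x $ i)) = grad Ps s t x \<bullet> (r s t x *\<^sub>R vs s t x + rho s t x *\<^sub>R a s t x)"
      unfolding grad_s inner_vec_def by simp
    ultimately show ?thesis by simp
  qed
  have sum_t: "(\<Sum>i\<in>UNIV. get i x) = grad Pt s t x \<bullet> (r s t x *\<^sub>R vt s t x + rho s t x *\<^sub>R b s t x) + Pt s t x * (\<Sum>i\<in>UNIV. blinfun_apply (Drho (s,t,x)) (0,0,axis i 1) * b s t x $ i + blinfun_apply (Dr (s,t,x)) (0,0,axis i 1) * vt s t x $ i + rho s t x * blinfun_apply (Db (s,t,x)) (0,0,axis i 1) $ i + r s t x * blinfun_apply (Dvt (s,t,x)) (0,0,axis i 1) $ i)" for x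
  proof -
    have "(\<Sum>i\<in>UNIV. get i x) = (\<Sum>i\<in>UNIV. blinfun_apply (DPt (s,t,x)) (0,0,axis i 1) * (r s t x * vt s t x $ i + rho s t x * b s t x $ i)) + Pt s t x * (\<Sum>i\<in>UNIV. blinfun_apply (Drho (s,t,x)) (0,0,axis i 1) * b s t x $ i + blinfun_apply (Dr (s,t,x)) (0,0,axis i 1) * vt s t x $ i + rho s t x * blinfun_apply (Db (s,t,x)) (0,0,axis i 1) $ i + r s t x * blinfun_apply (Dvt (s,t,x)) (0,0,axis i 1) $ i)"
      unfolding get_def sum_distrib_left by (rule sum.distrib)
    moreover have "(\<Sum>i\<in>UNIV. blinfun_apply (DPt (s,t,x)) (0,0,axis i 1) * (r s t x * vt s t x $ i + rho s t x * b s t x $ i)) = grad Pt s t x \<bullet> (r s t x *\<^sub>R vt s t x + rho s t x *\<^sub>R b s t x)"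
      unfolding grad_t inner_vec_def by simp
    ultimately show ?thesis by simp
  qed
  have point: "e x + (L1 x - (\<Sum>i\<in>UNIV. ges i x) - (\<Sum>i\<in>UNIV. get i x)) = blinfun_apply (DPs (s,t,x)) (1,0,0) * r s t x + Ps s t x * blinfun_apply (Dr (s,t,x)) (1,0,0) + blinfun_apply (DPt (s,t,x)) (0,1,0) * r s t x + Pt s t x * blinfun_apply (Dr (s,t,x)) (0,1,0)" for x
  proof -
    have "e x + (L1 x - (\<Sum>i\<in>UNIV. ges i x) - (\<Sum>i\<in>UNIV. get i x)) =
      inverse (Aarea rho vs vt s t) / 2 * ((2 * (vs s t x \<bullet> a s t x) * rho s t x + (norm (vs s t x))\<^sup>2 * r s t x) * Gss rho vt s t
        + (2 * (vt s t x \<bullet> b s t x) * rho s t x + (norm (vt s t x))\<^sup>2 * r s t x) * Gss rho vs s t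
        - 2 * (((vs s t x \<bullet> b s t x) + (a s t x \<bullet> vt s t x)) * rho s t x + (vs s t x \<bullet> vt s t x) * r s t x) * Gst rho vs vt s t)
      + (Ps s t x * blinfun_apply (Dr (s,t,x)) (1,0,0) + Pt s t x * blinfun_apply (Dr (s,t,x)) (0,1,0) - grad Ps s t x \<bullet> (r s t x *\<^sub>R vs s t x + rho s t x *\<^sub>R a s t x)
         - grad Pt s t x \<bullet> (r s t x *\<^sub>R vt s t x + rho s t x *\<^sub>R b s t x))"
      unfolding sum_s sum_t e_def L1_def c1ss_def c1tt_def c1st_def by (simp add: algebra_simps)
    also have "\<dots> = blinfun_apply (DPs (s,t,x)) (1,0,0) * r s t x + Ps s t x * blinfun_apply (Dr (s,t,x)) (1,0,0) + blinfun_apply (DPt (s,t,x)) (0,1,0) * r s t x + Pt s t x * blinfun_apply (Dr (s,t,x)) (0,1,0)"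
      by (rule pointwise_alg[OF gradPs[symmetric] gradPt[symmetric]])
         (use HJ[of x] in \<open>simp add: ds_Ps dt_Pt Gst_sym[of rho vt vs]\<close>)
    finally show ?thesis .
  qed
  have derivA: "deriv (\<lambda>\<epsilon>. Aarea (pert rho \<epsilon> r) (pert vs \<epsilon> a) (pert vt \<epsilon> b) s t) 0 = A1" by (rule DERIV_imp_deriv[OF dAr])
  have derivL: "(\<lambda>x. deriv (\<lambda>\<epsilon>. lag_density (pert rho \<epsilon> r) (pert vs \<epsilon> a) (pert vt \<epsilon> b) (pert Ps \<epsilon> p) (pert Pt \<epsilon> q) s t x) 0) = L1" by (rule ext, rule DERIV_imp_deriv[OF dlag])
  have isum_s: "integrable lborel (\<lambda>x. \<Sum>i\<in>UNIV. ges i x)" using ibp_s by (intro Bochner_Integration.integrable_sum) auto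
  have isum_t: "integrable lborel (\<lambda>x. \<Sum>i\<in>UNIV. get i x)" using ibp_t by (intro Bochner_Integration.integrable_sum) auto
  have zsum_s: "integral\<^sup>L lborel (\<lambda>x. \<Sum>i\<in>UNIV. ges i x) = 0"
    using ibp_s by (subst Bochner_Integration.integral_sum) auto
  have zsum_t: "integral\<^sup>L lborel (\<lambda>x. \<Sum>i\<in>UNIV. get i x) = 0"
    using ibp_t by (subst Bochner_Integration.integral_sum) auto
  have fvi: "first_var_integrand rho vs vt Ps Pt r a b p q s t = A1 + integral\<^sup>L lborel L1"
    unfolding first_var_integrand_def derivA derivL ..
  also have "\<dots> = integral\<^sup>L lborel (\<lambda>x. e x + (L1 x - (\<Sum>i\<in>UNIV. ges i x) - (\<Sum>i\<in>UNIV. get i x)))"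
    using ie iL1 isum_s isum_t zsum_s zsum_t inte by simp
  also have "\<dots> = (LINT x|lborel. blinfun_apply (DPs (s,t,x)) (1,0,0) * r s t x + Ps s t x * blinfun_apply (Dr (s,t,x)) (1,0,0) + blinfun_apply (DPt (s,t,x)) (0,1,0) * r s t x + Pt s t x * blinfun_apply (Dr (s,t,x)) (0,1,0))"
    using point by simp
  finally have fv: "first_var_integrand rho vs vt Ps Pt r a b p q s t = (LINT x|lborel. blinfun_apply (DPs (s,t,x)) (1,0,0) * r s t x + Ps s t x * blinfun_apply (Dr (s,t,x)) (1,0,0) + blinfun_apply (DPt (s,t,x)) (0,1,0) * r s t x + Pt s t x * blinfun_apply (Dr (s,t,x)) (0,1,0))" .
  have d1: "(\<lambda>\<epsilon>. Aarea (pert rho \<epsilon> r) (pert vs \<epsilon> a) (pert vt \<epsilon> b) s t) differentiable (at 0)" using dAr real_differentiable_def by blast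
  have d2: "\<forall>x. (\<lambda>\<epsilon>. lag_density (pert rho \<epsilon> r) (pert vs \<epsilon> a) (pert vt \<epsilon> b) (pert Ps \<epsilon> p) (pert Pt \<epsilon> q) s t x) differentiable (at 0)" using dlag real_differentiable_def by blast
  show ?thesis using d1 d2 fv iL1 derivL by simp
qed


lemma deriv_local_zero:
  fixes g :: "'a::real_normed_vector \<Rightarrow> real"
  assumes S: "closed S" "\<And>y. y \<notin> S \<Longrightarrow> g y = 0" and x: "x \<notin> S"
  shows "((\<lambda>h. g (x + h *\<^sub>R e)) has_real_derivative 0) (at 0)"
proof -
  have "open (-S)" using S by auto
  then obtain r where r: "r > 0" "ball x r \<subseteq> -S" using x
    by (metis ComplI open_contains_ball)
  have ev: "eventually (\<lambda>h. g (x + h *\<^sub>R e) = 0) (nhds 0)"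
    unfolding eventually_nhds_metric
  proof (intro exI[of _ "r / (norm e + 1)"] conjI allI impI)
    show "0 < r / (norm e + 1)" using r by (simp add: add_nonneg_pos)
    fix h :: real assume h: "dist h 0 < r / (norm e + 1)"
    have "norm (h *\<^sub>R e) = \<bar>h\<bar> * norm e" by simp
    also have "\<dots> \<le> \<bar>h\<bar> * (norm e + 1)" by (simp add: mult_left_mono)
    also have "\<dots> < r" using h by (simp add: pos_less_divide_eq add_nonneg_pos)
    finally have "x + h *\<^sub>R e \<in> ball x r" by (simp add: dist_norm)
    then show "g (x + h *\<^sub>R e) = 0" using r S by auto
  qed
  have "((\<lambda>_. 0::real) has_real_derivative 0) (at 0)" by simp
  then show ?thesis using DERIV_cong_ev[OF refl ev refl] by simp
qed

lemma dir_deriv: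
  fixes F :: "'a::real_normed_vector \<Rightarrow> real"
  assumes "(F has_derivative blinfun_apply D) (at p)"
  shows "((\<lambda>h. F (p + h *\<^sub>R w)) has_real_derivative blinfun_apply D w) (at 0)"
proof -
  have l: "((\<lambda>h::real. p + h *\<^sub>R w) has_derivative (\<lambda>h. 0 + h *\<^sub>R w)) (at 0)"
    by (intro has_derivative_add has_derivative_const has_derivative_scaleR_left has_derivative_ident)
  have "((\<lambda>h. F (p + h *\<^sub>R w)) has_derivative (\<lambda>h. blinfun_apply D (0 + h *\<^sub>R w))) (at 0)"
    using has_derivative_compose[OF l, of F] assms by (simp add: o_def)
  moreover have "(\<lambda>h. blinfun_apply D (0 + h *\<^sub>R w)) = (*) (blinfun_apply D w)"
    by (rule ext, simp add: blinfun.scaleR_right mult.commute)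
  ultimately show ?thesis by (simp add: has_field_derivative_def)
qed

lemma global_part:
  fixes F G :: "real \<times> real \<times> (real^'n) \<Rightarrow> real"
    and DF DG :: "real \<times> real \<times> (real^'n) \<Rightarrow> (real \<times> real \<times> (real^'n)) \<Rightarrow>\<^sub>L real"
  assumes dF: "\<And>z. z \<in> U \<Longrightarrow> (F has_derivative blinfun_apply (DF z)) (at z)" and cF: "continuous_on U DF" "continuous_on U F"
    and dG: "\<And>z. (G has_derivative blinfun_apply (DG z)) (at z)" and cG: "continuous_on UNIV DG" "continuous_on UNIV G"
    and U: "open U" and K: "compact K" "K \<subseteq> U" and Kz: "\<And>z. z \<notin> K \<Longrightarrow> G z = 0" "\<And>z. z \<notin> K \<Longrightarrow> DG z = 0"
  shows "integrable lborel (\<lambda>z::(real \<times> real) \<times> (real^'n).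
      blinfun_apply (DF (fst (fst z), snd (fst z), snd z)) (w1, w2, 0) * G (fst (fst z), snd (fst z), snd z)
      + F (fst (fst z), snd (fst z), snd z) * blinfun_apply (DG (fst (fst z), snd (fst z), snd z)) (w1, w2, 0))
    \<and> integral\<^sup>L lborel (\<lambda>z::(real \<times> real) \<times> (real^'n).
      blinfun_apply (DF (fst (fst z), snd (fst z), snd z)) (w1, w2, 0) * G (fst (fst z), snd (fst z), snd z)
      + F (fst (fst z), snd (fst z), snd z) * blinfun_apply (DG (fst (fst z), snd (fst z), snd z)) (w1, w2, 0)) = 0"
proof -
  define Rs :: "(real \<times> real) \<times> (real^'n) \<Rightarrow> real \<times> real \<times> (real^'n)" where
    "Rs z = (fst (fst z), snd (fst z), snd z)" for z
  define e :: "(real \<times> real) \<times> (real^'n)" where "e = ((w1, w2), 0)"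
  define w :: "real \<times> real \<times> (real^'n)" where "w = (w1, w2, 0)"
  have Rs_lin: "Rs (z + h *\<^sub>R e) = Rs z + h *\<^sub>R w" for z h unfolding Rs_def e_def w_def by simp
  have cRs: "continuous_on UNIV Rs" unfolding Rs_def by (intro continuous_intros)
  define Kp where "Kp = (\<lambda>p. ((fst p, fst (snd p)), snd (snd p))) ` K"
  have Kpc: "compact Kp" unfolding Kp_def by (intro compact_continuous_image K(1) continuous_intros)
  have notK: "Rs z \<notin> K" if "z \<notin> Kp" for z
  proof
    assume "Rs z \<in> K"
    then have "(\<lambda>p. ((fst p, fst (snd p)), snd (snd p))) (Rs z) \<in> Kp" unfolding Kp_def by blast
    then show False using that by (simp add: Rs_def)
  qed
  define U' where "U' = Rs -` U"
  have U'o: "open U'" unfolding U'_def using open_vimage[OF U cRs] by simp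
  have cover: "U' \<union> (- Kp) = UNIV"
  proof -
    have "z \<in> U'" if "z \<in> Kp" for z
      using that K(2) unfolding Kp_def U'_def Rs_def by auto
    then show ?thesis by auto
  qed
  define g where "g z = F (Rs z) * G (Rs z)" for z
  define ge where "ge z = blinfun_apply (DF (Rs z)) w * G (Rs z) + F (Rs z) * blinfun_apply (DG (Rs z)) w" for z
  have g0: "g z = 0" if "z \<notin> Kp" for z unfolding g_def using Kz(1)[OF notK[OF that]] by simp
  have ge0: "ge z = 0" if "z \<notin> Kp" for z unfolding ge_def using Kz[OF notK[OF that]] by simp
  have D: "((\<lambda>h. g (z + h *\<^sub>R e)) has_real_derivative ge z) (at 0)" for z
  proof (cases "Rs z \<in> U")
    case True
    show ?thesis unfolding g_def Rs_lin
      by (rule DERIV_eq[OF DERIV_mult[OF dir_deriv[OF dF[OF True]] dir_deriv[OF dG]]])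
         (simp add: ge_def algebra_simps)
  next
    case False
    then have "z \<notin> Kp" using cover unfolding U'_def by auto
    moreover have "closed Kp" using Kpc compact_imp_closed by auto
    ultimately have "((\<lambda>h. g (z + h *\<^sub>R e)) has_real_derivative 0) (at 0)"
      using deriv_local_zero[of Kp g z e] g0 by blast
    then show ?thesis using ge0[OF \<open>z \<notin> Kp\<close>] by simp
  qed
  have cU: "continuous_on U' (\<lambda>z. DF (Rs z))" "continuous_on U' (\<lambda>z. F (Rs z))"
    by (rule continuous_on_compose2[OF cF(1)], rule continuous_on_subset[OF cRs], auto simp: U'_def)
       (rule continuous_on_compose2[OF cF(2)], rule continuous_on_subset[OF cRs], auto simp: U'_def)
  have cU2: "continuous_on UNIV (\<lambda>z. DG (Rs z))" "continuous_on UNIV (\<lambda>z. G (Rs z))"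
    by (rule continuous_on_compose2[OF cG(1) cRs], simp) (rule continuous_on_compose2[OF cG(2) cRs], simp)
  have cge: "continuous_on UNIV ge"
  proof -
    have "continuous_on (U' \<union> (- Kp)) ge"
    proof (rule continuous_on_open_Un[OF U'o])
      show "continuous_on U' ge" unfolding ge_def
        by (intro continuous_intros cU continuous_on_subset[OF cU2(1)] continuous_on_subset[OF cU2(2)]) auto
      show "open (- Kp)" using Kpc compact_imp_closed by auto
      show "continuous_on (- Kp) ge"
        by (rule continuous_on_cong[THEN iffD2, OF refl _ continuous_on_const[of _ 0]]) (simp add: ge0)
    qed
    then show ?thesis using cover by simp
  qed
  have cg: "continuous_on UNIV g"
  proof -
    have "continuous_on (U' \<union> (- Kp)) g"
    proof (rule continuous_on_open_Un[OF U'o])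
      show "continuous_on U' g" unfolding g_def
        by (intro continuous_intros cU continuous_on_subset[OF cU2(2)]) auto
      show "open (- Kp)" using Kpc compact_imp_closed by auto
      show "continuous_on (- Kp) g"
        by (rule continuous_on_cong[THEN iffD2, OF refl _ continuous_on_const[of _ 0]]) (simp add: g0)
    qed
    then show ?thesis using cover by simp
  qed
  from integral_partial_zero[OF D cge cg Kpc g0]
  show ?thesis unfolding ge_def Rs_def w_def .
qed


theorem mainTheorem1:
  fixes \<rho> :: "real \<Rightarrow> real \<Rightarrow> real^'n \<Rightarrow> real"
    and vs vt :: "real \<Rightarrow> real \<Rightarrow> real^'n \<Rightarrow> real^'n"
    and \<Phi>s \<Phi>t :: "real \<Rightarrow> real \<Rightarrow> real^'n \<Rightarrow> real"
  assumes C1: "C1_on Dom (unc \<rho>)" "C1_on Dom (unc vs)" "C1_on Dom (unc vt)"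
    and C1\<Phi>: "C1_on Dom (unc \<Phi>s)" "C1_on Dom (unc \<Phi>t)"
    and dens: "\<And>s t x. s \<in> {0..1} \<Longrightarrow> t \<in> {0..1} \<Longrightarrow> \<rho> s t x \<ge> 0"
              "\<And>s t. s \<in> {0..1} \<Longrightarrow> t \<in> {0..1} \<Longrightarrow> integrable lborel (\<rho> s t)"
              "\<And>s t. s \<in> {0..1} \<Longrightarrow> t \<in> {0..1} \<Longrightarrow> (LINT x|lborel. \<rho> s t x) = 1"
              "\<And>s t. s \<in> {0..1} \<Longrightarrow> t \<in> {0..1} \<Longrightarrow> integrable lborel (\<lambda>x. (norm x)\<^sup>2 * \<rho> s t x)"
    and energy: "\<And>s t. s \<in> {0..1} \<Longrightarrow> t \<in> {0..1} \<Longrightarrow> integrable lborel (\<lambda>x. (norm (vs s t x))\<^sup>2 * \<rho> s t x)"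
                "\<And>s t. s \<in> {0..1} \<Longrightarrow> t \<in> {0..1} \<Longrightarrow> integrable lborel (\<lambda>x. (norm (vt s t x))\<^sup>2 * \<rho> s t x)"
    and Apos: "\<And>s t. s \<in> {0..1} \<Longrightarrow> t \<in> {0..1} \<Longrightarrow> Aarea \<rho> vs vt s t > 0"
    and gradPs: "\<And>s t x. s \<in> {0<..<1} \<Longrightarrow> t \<in> {0<..<1} \<Longrightarrow>
        inverse (Aarea \<rho> vs vt s t) *\<^sub>R (Gss \<rho> vt s t *\<^sub>R vs s t x - Gst \<rho> vs vt s t *\<^sub>R vt s t x)
          = grad \<Phi>s s t x"
    and gradPt: "\<And>s t x. s \<in> {0<..<1} \<Longrightarrow> t \<in> {0<..<1} \<Longrightarrow>
        inverse (Aarea \<rho> vs vt s t) *\<^sub>R (Gss \<rho> vs s t *\<^sub>R vt s t x - Gst \<rho> vs vt s t *\<^sub>R vs s t x)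
          = grad \<Phi>t s t x"
    and HJ: "\<And>s t x. s \<in> {0<..<1} \<Longrightarrow> t \<in> {0<..<1} \<Longrightarrow>
        ds \<Phi>s s t x + dt \<Phi>t s t x
        + inverse (Aarea \<rho> vs vt s t) *
            (1/2 * (norm (vs s t x))\<^sup>2 * Gss \<rho> vt s t + 1/2 * (norm (vt s t x))\<^sup>2 * Gss \<rho> vs s t
             - (vt s t x \<bullet> vs s t x) * Gst \<rho> vt vs s t) = 0"
    and cont_s: "\<And>s t x. s \<in> {0<..<1} \<Longrightarrow> t \<in> {0<..<1} \<Longrightarrow>
        ds \<rho> s t x + divg (\<lambda>s t x. \<rho> s t x *\<^sub>R vs s t x) s t x = 0"
    and cont_t: "\<And>s t x. s \<in> {0<..<1} \<Longrightarrow> t \<in> {0<..<1} \<Longrightarrow>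
        dt \<rho> s t x + divg (\<lambda>s t x. \<rho> s t x *\<^sub>R vt s t x) s t x = 0"
  shows "critical_point \<rho> vs vt \<Phi>s \<Phi>t"
proof -
  obtain Drho where dRho: "\<And>z. z \<in> IntDom \<Longrightarrow> (unc \<rho> has_derivative blinfun_apply (Drho z)) (at z)"
      and cRho: "continuous_on IntDom Drho" "continuous_on IntDom (unc \<rho>)"
    using C1_int[OF C1(1)] by blast
  obtain Dvs where dVs: "\<And>z. z \<in> IntDom \<Longrightarrow> (unc vs has_derivative blinfun_apply (Dvs z)) (at z)"
      and cVs: "continuous_on IntDom Dvs" "continuous_on IntDom (unc vs)"
    using C1_int[OF C1(2)] by blast
  obtain Dvt where dVt: "\<And>z. z \<in> IntDom \<Longrightarrow> (unc vt has_derivative blinfun_apply (Dvt z)) (at z)"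
      and cVt: "continuous_on IntDom Dvt" "continuous_on IntDom (unc vt)"
    using C1_int[OF C1(3)] by blast
  obtain DPs where dPs: "\<And>z. z \<in> IntDom \<Longrightarrow> (unc \<Phi>s has_derivative blinfun_apply (DPs z)) (at z)"
      and cPs: "continuous_on IntDom DPs" "continuous_on IntDom (unc \<Phi>s)"
    using C1_int[OF C1\<Phi>(1)] by blast
  obtain DPt where dPt: "\<And>z. z \<in> IntDom \<Longrightarrow> (unc \<Phi>t has_derivative blinfun_apply (DPt z)) (at z)"
      and cPt: "continuous_on IntDom DPt" "continuous_on IntDom (unc \<Phi>t)"
    using C1_int[OF C1\<Phi>(2)] by blast
  show ?thesis unfolding critical_point_def
  proof (intro allI impI)
    fix r :: "real \<Rightarrow> real \<Rightarrow> real^'n \<Rightarrow> real" and a b :: "real \<Rightarrow> real \<Rightarrow> real^'n \<Rightarrow> real^'n"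
      and p1 q1 :: "real \<Rightarrow> real \<Rightarrow> real^'n \<Rightarrow> real"
    assume tf: "test_fun r \<and> test_fun a \<and> test_fun b \<and> test_fun p1 \<and> test_fun q1"
    obtain Dr Kr where dR: "\<And>z. (unc r has_derivative blinfun_apply (Dr z)) (at z)"
        and cR: "continuous_on UNIV Dr" "continuous_on UNIV (unc r)"
        and Kr: "compact Kr" "Kr \<subseteq> IntDom" "\<And>z. z \<notin> Kr \<Longrightarrow> unc r z = 0" "\<And>z. z \<notin> Kr \<Longrightarrow> Dr z = 0"
      using test_ext[of r] tf by blast
    obtain Da Ka where dA: "\<And>z. (unc a has_derivative blinfun_apply (Da z)) (at z)"
        and cA: "continuous_on UNIV Da" "continuous_on UNIV (unc a)"
        and Ka: "compact Ka" "Ka \<subseteq> IntDom" "\<And>z. z \<notin> Ka \<Longrightarrow> unc a z = 0" "\<And>z. z \<notin> Ka \<Longrightarrow> Da z = 0"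
      using test_ext[of a] tf by blast
    obtain Db Kb where dB: "\<And>z. (unc b has_derivative blinfun_apply (Db z)) (at z)"
        and cB: "continuous_on UNIV Db" "continuous_on UNIV (unc b)"
        and Kb: "compact Kb" "Kb \<subseteq> IntDom" "\<And>z. z \<notin> Kb \<Longrightarrow> unc b z = 0" "\<And>z. z \<notin> Kb \<Longrightarrow> Db z = 0"
      using test_ext[of b] tf by blast
    define K where "K = Kr \<union> Ka \<union> Kb"
    have K: "compact K" "K \<subseteq> IntDom" unfolding K_def using Kr Ka Kb by auto
    have Kz: "\<And>z. z \<notin> K \<Longrightarrow> unc r z = 0" "\<And>z. z \<notin> K \<Longrightarrow> unc a z = 0" "\<And>z. z \<notin> K \<Longrightarrow> unc b z = 0"
            "\<And>z. z \<notin> K \<Longrightarrow> Dr z = 0" "\<And>z. z \<notin> K \<Longrightarrow> Da z = 0" "\<And>z. z \<notin> K \<Longrightarrow> Db z = 0"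
      unfolding K_def using Kr Ka Kb by auto
    have per: "(\<lambda>\<epsilon>. Aarea (pert \<rho> \<epsilon> r) (pert vs \<epsilon> a) (pert vt \<epsilon> b) s t) differentiable (at 0)
      \<and> (\<forall>x. (\<lambda>\<epsilon>. lag_density (pert \<rho> \<epsilon> r) (pert vs \<epsilon> a) (pert vt \<epsilon> b) (pert \<Phi>s \<epsilon> p1) (pert \<Phi>t \<epsilon> q1) s t x) differentiable (at 0))
      \<and> integrable lborel (\<lambda>x. deriv (\<lambda>\<epsilon>. lag_density (pert \<rho> \<epsilon> r) (pert vs \<epsilon> a) (pert vt \<epsilon> b) (pert \<Phi>s \<epsilon> p1) (pert \<Phi>t \<epsilon> q1) s t x) 0)
      \<and> first_var_integrand \<rho> vs vt \<Phi>s \<Phi>t r a b p1 q1 s t = (LINT x|lborel. blinfun_apply (DPs (s,t,x)) (1,0,0) * r s t x + \<Phi>s s t x * blinfun_apply (Dr (s,t,x)) (1,0,0) + blinfun_apply (DPt (s,t,x)) (0,1,0) * r s t x + \<Phi>t s t x * blinfun_apply (Dr (s,t,x)) (0,1,0))"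
      if st: "s \<in> {0<..<1}" "t \<in> {0<..<1}" for s t
    proof -
      have st01: "s \<in> {0..1}" "t \<in> {0..1}" using st by auto
      show ?thesis
        by (rule per_st[OF st dRho cRho dVs cVs dVt cVt dPs cPs dPt cPt dR cR dA cA dB cB K Kz
            dens(1)[OF st01] energy(1)[OF st01] energy(2)[OF st01] Apos[OF st01]
            gradPs[OF st] gradPt[OF st] HJ[OF st] cont_s[OF st] cont_t[OF st]])
    qed
    define Hg :: "(real \<times> real) \<times> (real^'n) \<Rightarrow> real" where
      "Hg z = (blinfun_apply (DPs (fst (fst z), snd (fst z), snd z)) (1, 0, 0) * r (fst (fst z)) (snd (fst z)) (snd z)
        + \<Phi>s (fst (fst z)) (snd (fst z)) (snd z) * blinfun_apply (Dr (fst (fst z), snd (fst z), snd z)) (1, 0, 0))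
        + (blinfun_apply (DPt (fst (fst z), snd (fst z), snd z)) (0, 1, 0) * r (fst (fst z)) (snd (fst z)) (snd z)
        + \<Phi>t (fst (fst z)) (snd (fst z)) (snd z) * blinfun_apply (Dr (fst (fst z), snd (fst z), snd z)) (0, 1, 0))" for z
    note gp1 = global_part[OF dPs cPs dR cR open_IntDom K Kz(1) Kz(4), of 1 0]
    note gp2 = global_part[OF dPt cPt dR cR open_IntDom K Kz(1) Kz(4), of 0 1]
    have Hg_eq: "Hg = (\<lambda>z. (blinfun_apply (DPs (fst (fst z), snd (fst z), snd z)) (1, 0, 0) * unc r (fst (fst z), snd (fst z), snd z)
        + unc \<Phi>s (fst (fst z), snd (fst z), snd z) * blinfun_apply (Dr (fst (fst z), snd (fst z), snd z)) (1, 0, 0))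
        + (blinfun_apply (DPt (fst (fst z), snd (fst z), snd z)) (0, 1, 0) * unc r (fst (fst z), snd (fst z), snd z)
        + unc \<Phi>t (fst (fst z), snd (fst z), snd z) * blinfun_apply (Dr (fst (fst z), snd (fst z), snd z)) (0, 1, 0)))"
      unfolding Hg_def unc_app ..
    have iH: "integrable lborel Hg" unfolding Hg_eq
      by (rule Bochner_Integration.integrable_add[OF conjunct1[OF gp1] conjunct1[OF gp2]])
    have zH: "integral\<^sup>L lborel Hg = 0" unfolding Hg_eq
      using Bochner_Integration.integral_add[OF conjunct1[OF gp1] conjunct1[OF gp2]] gp1 gp2 by simp
    have iHp: "integrable (lborel \<Otimes>\<^sub>M lborel) Hg" using iH by (simp add: lborel_prod)
    have int1: "integrable lborel (\<lambda>st. LINT x|lborel. Hg (st, x))"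
      by (rule lborel_pair.integrable_fst'[OF iHp])
    have int2: "(LINT st|lborel. LINT x|lborel. Hg (st, x)) = 0"
      using lborel_pair.integral_fst'[OF iHp] zH by (simp add: lborel_prod)
    have eqf: "(\<lambda>st. indicator ({0<..<1} \<times> {0<..<1}) st *\<^sub>R
        (\<lambda>(s,t). first_var_integrand \<rho> vs vt \<Phi>s \<Phi>t r a b p1 q1 s t) st) = (\<lambda>st. LINT x|lborel. Hg (st, x))"
    proof (rule ext)
      fix st :: "real \<times> real"
      obtain s t where st: "st = (s, t)" by (cases st)
      show "indicator ({0<..<1} \<times> {0<..<1}) st *\<^sub>R (\<lambda>(s,t). first_var_integrand \<rho> vs vt \<Phi>s \<Phi>t r a b p1 q1 s t) st
          = (LINT x|lborel. Hg (st, x))"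
      proof (cases "s \<in> {0<..<1} \<and> t \<in> {0<..<1}")
        case True
        then show ?thesis using per[of s t] unfolding st by (simp add: Hg_def algebra_simps)
      next
        case False
        have "Hg (st, x) = 0" for x
        proof -
          have "(s,t,x) \<notin> K" using False K(2) by (auto simp: IntDom_iff)
          then show ?thesis using Kz(1)[of "(s,t,x)"] Kz(4)[of "(s,t,x)"] unfolding st Hg_def by (simp add: unc_app)
        qed
        then show ?thesis using False unfolding st by simp
      qed
    qed
    show "(\<forall>s\<in>{0<..<1}. \<forall>t\<in>{0<..<1}.
         (\<lambda>\<epsilon>. Aarea (pert \<rho> \<epsilon> r) (pert vs \<epsilon> a) (pert vt \<epsilon> b) s t) differentiable (at 0)
       \<and> (\<forall>x. (\<lambda>\<epsilon>. lag_density (pert \<rho> \<epsilon> r) (pert vs \<epsilon> a) (pert vt \<epsilon> b)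
                                (pert \<Phi>s \<epsilon> p1) (pert \<Phi>t \<epsilon> q1) s t x) differentiable (at 0))
       \<and> integrable lborel (\<lambda>x. deriv (\<lambda>\<epsilon>. lag_density (pert \<rho> \<epsilon> r) (pert vs \<epsilon> a) (pert vt \<epsilon> b)
                                (pert \<Phi>s \<epsilon> p1) (pert \<Phi>t \<epsilon> q1) s t x) 0))
      \<and> set_integrable lborel ({0<..<1} \<times> {0<..<1})
           (\<lambda>(s,t). first_var_integrand \<rho> vs vt \<Phi>s \<Phi>t r a b p1 q1 s t)
      \<and> (LINT p:{0<..<1} \<times> {0<..<1}|lborel.
           (\<lambda>(s,t). first_var_integrand \<rho> vs vt \<Phi>s \<Phi>t r a b p1 q1 s t) p) = 0"
    proof (intro conjI ballI)
      fix s t :: real assume "s \<in> {0<..<1}" "t \<in> {0<..<1}"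
      then show "(\<lambda>\<epsilon>. Aarea (pert \<rho> \<epsilon> r) (pert vs \<epsilon> a) (pert vt \<epsilon> b) s t) differentiable (at 0)"
        "\<forall>x. (\<lambda>\<epsilon>. lag_density (pert \<rho> \<epsilon> r) (pert vs \<epsilon> a) (pert vt \<epsilon> b)
                                (pert \<Phi>s \<epsilon> p1) (pert \<Phi>t \<epsilon> q1) s t x) differentiable (at 0)"
        "integrable lborel (\<lambda>x. deriv (\<lambda>\<epsilon>. lag_density (pert \<rho> \<epsilon> r) (pert vs \<epsilon> a) (pert vt \<epsilon> b)
                                (pert \<Phi>s \<epsilon> p1) (pert \<Phi>t \<epsilon> q1) s t x) 0)"
        using per[of s t] by auto
    next
      show "set_integrable lborel ({0<..<1} \<times> {0<..<1}) (\<lambda>(s,t). first_var_integrand \<rho> vs vt \<Phi>s \<Phi>t r a b p1 q1 s t)"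
        unfolding set_integrable_def eqf by (rule int1)
    next
      show "(LINT p:{0<..<1} \<times> {0<..<1}|lborel. (\<lambda>(s,t). first_var_integrand \<rho> vs vt \<Phi>s \<Phi>t r a b p1 q1 s t) p) = 0"
        unfolding set_lebesgue_integral_def eqf by (rule int2)
    qed
  qed
qed

end
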